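(* Let $(M^n,c,v^m d\nu)$ be a smooth conformal measure space with characteristic constant $\mu$, $n\ge3$, $m\in\mathbb{R}\setminus\{-n,1-n,2-n\}$. Let $u\in\mathcal{E}[1]$ and $I=\frac{1}{m+n}\mathbb{D}^Wu$. In any scale $g\in c$, $$|I|^2=-\frac{(R^m_\phi+m\mu v^{-2})u^2+2(m+n-1)u\Delta_\phi u-(m+n)(m+n-1)|\nabla u|^2}{(m+n)(m+n-1)}.$$ In particular, for a constant $\lambda$, the smooth metric measure space $(M^n,u^{-2}g,(u^{-1}v)^m\mathrm{dvol}_{u^{-2}g})$ satisfies $\hat R^m_\phi+m\mu\hat v^{-2}=(m+n)\lambda$ (where $\hat v=u^{-1}v$ and $\hat R^m_\phi=R(\hat g)-2m\hat v^{-1}\hat\Delta\hat v-m(m-1)\hat v^{-2}|\hat\nabla\hat v|^2_{\hat g}$ with $\hat g=u^{-2}g$) if and only if $|I|^2=-\frac{\lambda}{m+n-1}$.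
   Context: $(M^n,c)$: manifold with a conformal class of Riemannian metrics, $n\ge3$. $\mathcal{E}[w]$: conformal densities of weight $w$ (functions in a scale $g\in c$, multiplied by $e^{ws}$ under $g\mapsto e^{2s}g$). Standard tractor bundle $\mathbb{T}\cong\mathbb{R}\oplus TM\oplus\mathbb{R}$ in a scale, tractor $I$ with top $\sigma$, middle $\omega$, bottom $\rho$; tractor metric $|I|^2=2\sigma\rho+|\omega|_g^2$. SCMS $(M^n,c,v^md\nu)$ with characteristic constant $\mu$: positive $v\in\mathcal{E}[1]$, $m\in\mathbb{R}$, constant $\mu$. In a scale, $v$ is a positive function, $\Delta=\operatorname{tr}_g\nabla^2$, $\Delta_\phi u=\Delta u+mv^{-1}g(\nabla v,\nabla u)$, $R^m_\phi=R-2mv^{-1}\Delta v-m(m-1)v^{-2}|\nabla v|^2$, $\mathrm{J}^W=\frac{1}{2(m+n-1)}(R^m_\phi+m\mu v^{-2})$. The $W$-tractor-$D$ operator $\mathbb{D}^W:\mathcal{E}[w]\to\mathcal{T}[w-1]$ is given in a scale by: top $w(m+n+2w-2)u$, middle $(m+n+2w-2)\nabla u$, bottom $-(\Delta_\phi u+w\mathrm{J}^Wu)$. *)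

theory Defs
  imports "HOL-Analysis.Analysis"
begin

text \<open>Local (coordinate) rendering of the conformal / smooth metric measure space
  geometry: the manifold is replaced by an open set U of R^n (a chart), a metric
  in the conformal class is a smooth field of symmetric positive definite matrices,
  and all curvature quantities are defined through coordinate formulas.\<close>

type_synonym 'n metric = "real^'n \<Rightarrow> real^'n^'n"

definition pd :: "'n::finite \<Rightarrow> (real^'n \<Rightarrow> real) \<Rightarrow> real^'n \<Rightarrow> real" where
  "pd i f x = deriv (\<lambda>t. f (x + t *\<^sub>R axis i 1)) 0"

primrec Ck :: "nat \<Rightarrow> (real^'n::finite) set \<Rightarrow> (real^'n \<Rightarrow> real) \<Rightarrow> bool" where
  "Ck 0 U f = continuous_on U f"
| "Ck (Suc k) U f = (continuous_on U f \<and>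
      (\<forall>i. \<forall>x\<in>U. (\<lambda>t. f (x + t *\<^sub>R axis i 1)) differentiable (at 0)) \<and>
      (\<forall>i. Ck k U (pd i f)))"

definition smooth_fun :: "(real^'n::finite) set \<Rightarrow> (real^'n \<Rightarrow> real) \<Rightarrow> bool" where
  "smooth_fun U f = (\<forall>k. Ck k U f)"

definition riem_metric :: "(real^'n::finite) set \<Rightarrow> 'n metric \<Rightarrow> bool" where
  "riem_metric U g = ((\<forall>i j. smooth_fun U (\<lambda>x. g x $ i $ j)) \<and>
      (\<forall>x\<in>U. transpose (g x) = g x \<and> (\<forall>\<xi>. \<xi> \<noteq> 0 \<longrightarrow> \<xi> \<bullet> (g x *v \<xi>) > 0)))"

definition ginv :: "'n::finite metric \<Rightarrow> real^'n \<Rightarrow> real^'n^'n" where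
  "ginv g x = matrix_inv (g x)"

definition chr :: "'n::finite metric \<Rightarrow> 'n \<Rightarrow> 'n \<Rightarrow> 'n \<Rightarrow> real^'n \<Rightarrow> real" where
  "chr g k i j x = (1/2) * (\<Sum>l\<in>UNIV. ginv g x $ k $ l *
      (pd i (\<lambda>y. g y $ j $ l) x + pd j (\<lambda>y. g y $ i $ l) x - pd l (\<lambda>y. g y $ i $ j) x))"

definition ric :: "'n::finite metric \<Rightarrow> 'n \<Rightarrow> 'n \<Rightarrow> real^'n \<Rightarrow> real" where
  "ric g i j x = (\<Sum>k\<in>UNIV. pd k (chr g k i j) x - pd j (chr g k i k) x
      + (\<Sum>l\<in>UNIV. chr g k k l x * chr g l i j x - chr g k j l x * chr g l i k x))"

definition scal :: "'n::finite metric \<Rightarrow> real^'n \<Rightarrow> real" where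
  "scal g x = (\<Sum>i\<in>UNIV. \<Sum>j\<in>UNIV. ginv g x $ i $ j * ric g i j x)"

definition coinner :: "'n::finite metric \<Rightarrow> real^'n \<Rightarrow> real^'n \<Rightarrow> real^'n \<Rightarrow> real" where
  "coinner g x a b = (\<Sum>i\<in>UNIV. \<Sum>j\<in>UNIV. ginv g x $ i $ j * a $ i * b $ j)"

definition grad :: "(real^'n::finite \<Rightarrow> real) \<Rightarrow> real^'n \<Rightarrow> real^'n" where
  "grad f x = (\<chi> i. pd i f x)"

definition lap :: "'n::finite metric \<Rightarrow> (real^'n \<Rightarrow> real) \<Rightarrow> real^'n \<Rightarrow> real" where
  "lap g f x = (\<Sum>i\<in>UNIV. \<Sum>j\<in>UNIV. ginv g x $ i $ j *
      (pd i (pd j f) x - (\<Sum>k\<in>UNIV. chr g k i j x * pd k f x)))"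

definition lap_phi :: "'n::finite metric \<Rightarrow> real \<Rightarrow> (real^'n \<Rightarrow> real) \<Rightarrow> (real^'n \<Rightarrow> real) \<Rightarrow> real^'n \<Rightarrow> real" where
  "lap_phi g m v f x = lap g f x + m / v x * coinner g x (grad v x) (grad f x)"

definition Rmphi :: "'n::finite metric \<Rightarrow> real \<Rightarrow> (real^'n \<Rightarrow> real) \<Rightarrow> real^'n \<Rightarrow> real" where
  "Rmphi g m v x = scal g x - 2 * m / v x * lap g v x
      - m * (m - 1) / (v x)^2 * coinner g x (grad v x) (grad v x)"

definition JW :: "'n::finite metric \<Rightarrow> real \<Rightarrow> real \<Rightarrow> (real^'n \<Rightarrow> real) \<Rightarrow> real^'n \<Rightarrow> real" where
  "JW g m \<mu> v x = (Rmphi g m v x + m * \<mu> / (v x)^2) / (2 * (m + real CARD('n) - 1))"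

text \<open>Tractors in a scale: (top, middle, bottom).\<close>
type_synonym 'n tractor = "real \<times> (real^'n) \<times> real"

definition DW :: "'n::finite metric \<Rightarrow> real \<Rightarrow> real \<Rightarrow> (real^'n \<Rightarrow> real) \<Rightarrow> real
     \<Rightarrow> (real^'n \<Rightarrow> real) \<Rightarrow> real^'n \<Rightarrow> 'n tractor" where
  "DW g m \<mu> v w f x =
     (let N = m + real CARD('n) + 2 * w - 2 in
      (w * N * f x, N *\<^sub>R grad f x, - (lap_phi g m v f x + w * JW g m \<mu> v x * f x)))"

definition tractor_scale :: "real \<Rightarrow> 'n::finite tractor \<Rightarrow> 'n tractor" where
  "tractor_scale r I = (case I of (\<sigma>, \<omega>, \<rho>) \<Rightarrow> (r * \<sigma>, r *\<^sub>R \<omega>, r * \<rho>))"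

definition tractor_sqnorm :: "'n::finite metric \<Rightarrow> real^'n \<Rightarrow> 'n tractor \<Rightarrow> real" where
  "tractor_sqnorm g x I = (case I of (\<sigma>, \<omega>, \<rho>) \<Rightarrow> 2 * \<sigma> * \<rho> + coinner g x \<omega> \<omega>)"

definition conf_metric :: "(real^'n::finite \<Rightarrow> real) \<Rightarrow> 'n metric \<Rightarrow> 'n metric" where
  "conf_metric u g = (\<lambda>x. (1 / (u x)^2) *\<^sub>R g x)"

end

theory Submission
  imports Defs "HOL-Analysis.Analysis"
begin


definition lined :: "'n::finite \<Rightarrow> (real^'n \<Rightarrow> real) \<Rightarrow> real^'n \<Rightarrow> bool" where
  "lined i f x = ((\<lambda>t. f (x + t *\<^sub>R axis i 1)) differentiable (at 0))"

lemma pd_D: "lined i f x \<Longrightarrow> ((\<lambda>t. f (x + t *\<^sub>R axis i 1)) has_real_derivative pd i f x) (at 0)"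
  unfolding lined_def pd_def using DERIV_deriv_iff_real_differentiable by blast

lemma pd_I:
  assumes "((\<lambda>t. f (x + t *\<^sub>R axis i 1)) has_real_derivative D) (at 0)"
  shows "pd i f x = D" "lined i f x"
  using assms unfolding pd_def lined_def
  by (auto simp: DERIV_imp_deriv real_differentiable_def)

lemma pd_add: assumes a: "lined i f x" "lined i h x"
  shows "pd i (\<lambda>y. f y + h y) x = pd i f x + pd i h x \<and> lined i (\<lambda>y. f y + h y) x"
proof -
  have "((\<lambda>t. f (x + t *\<^sub>R axis i 1) + h (x + t *\<^sub>R axis i 1)) has_real_derivative pd i f x + pd i h x) (at 0)"
    by (rule DERIV_add[OF pd_D[OF a(1)] pd_D[OF a(2)]])
  then show ?thesis using pd_I[where f="\<lambda>y. f y + h y"] by auto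
qed

lemma pd_diff: assumes a: "lined i f x" "lined i h x"
  shows "pd i (\<lambda>y. f y - h y) x = pd i f x - pd i h x \<and> lined i (\<lambda>y. f y - h y) x"
proof -
  have "((\<lambda>t. f (x + t *\<^sub>R axis i 1) - h (x + t *\<^sub>R axis i 1)) has_real_derivative pd i f x - pd i h x) (at 0)"
    by (rule DERIV_diff[OF pd_D[OF a(1)] pd_D[OF a(2)]])
  then show ?thesis using pd_I[where f="\<lambda>y. f y - h y"] by auto
qed

lemma pd_mult: assumes a: "lined i f x" "lined i h x"
  shows "pd i (\<lambda>y. f y * h y) x = pd i f x * h x + f x * pd i h x \<and> lined i (\<lambda>y. f y * h y) x"
proof -
  have "((\<lambda>t. f (x + t *\<^sub>R axis i 1) * h (x + t *\<^sub>R axis i 1)) has_real_derivative pd i f x * h x + f x * pd i h x) (at 0)"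
    using DERIV_mult[OF pd_D[OF a(1)] pd_D[OF a(2)]] by (simp add: mult.commute)
  then show ?thesis using pd_I[where f="\<lambda>y. f y * h y"] by auto
qed

lemma pd_const: "pd i (\<lambda>y. c) x = 0 \<and> lined i (\<lambda>y. c) x"
proof -
  have h: "((\<lambda>t. c) has_real_derivative 0) (at 0)" by (rule DERIV_const)
  show ?thesis unfolding pd_def lined_def using DERIV_imp_deriv[OF h] h real_differentiable_def by blast
qed

lemma pd_inverse: "lined i f x \<Longrightarrow> f x \<noteq> 0 \<Longrightarrow>
   pd i (\<lambda>y. inverse (f y)) x = - (pd i f x * inverse (f x ^ 2)) \<and> lined i (\<lambda>y. inverse (f y)) x"
proof -
  assume a: "lined i f x" "f x \<noteq> 0"
  have "((\<lambda>t. inverse (f (x + t *\<^sub>R axis i 1))) has_real_derivative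
      - (pd i f x * inverse (f x ^ 2))) (at 0)"
    using DERIV_inverse_fun[OF pd_D[OF a(1)]] a(2) by (simp add: power2_eq_square)
  then show ?thesis using pd_I[where f="\<lambda>y. inverse (f y)"] by auto
qed

lemma pd_sum: "finite A \<Longrightarrow> (\<forall>a\<in>A. lined i (f a) x) \<Longrightarrow>
   pd i (\<lambda>y. \<Sum>a\<in>A. f a y) x = (\<Sum>a\<in>A. pd i (f a) x) \<and> lined i (\<lambda>y. \<Sum>a\<in>A. f a y) x"
proof -
  assume "finite A" "\<forall>a\<in>A. lined i (f a) x"
  then have "((\<lambda>t. \<Sum>a\<in>A. f a (x + t *\<^sub>R axis i 1)) has_real_derivative (\<Sum>a\<in>A. pd i (f a) x)) (at 0)"
    by (intro DERIV_sum pd_D) auto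
  then show ?thesis using pd_I[where f="\<lambda>y. \<Sum>a\<in>A. f a y"] by auto
qed

lemma eventually_line:
  fixes U :: "(real^'n::finite) set"
  assumes "open U" "x \<in> U"
  shows "eventually (\<lambda>t. x + t *\<^sub>R axis i 1 \<in> U) (nhds (0::real))"
proof -
  have "open ((\<lambda>t::real. x + t *\<^sub>R axis i 1) -` U)"
    by (rule continuous_open_vimage[OF assms(1)]) (intro continuous_intros)
  moreover have "(0::real) \<in> (\<lambda>t::real. x + t *\<^sub>R axis i 1) -` U" using assms by simp
  ultimately show ?thesis using eventually_nhds_in_open by fastforce
qed

lemma pd_local:
  assumes "open U" "x \<in> U" "\<forall>y\<in>U. f y = h y"
  shows "pd i f x = pd i h x" "lined i f x \<Longrightarrow> lined i h x"
proof -
  have ev: "eventually (\<lambda>t. f (x + t *\<^sub>R axis i 1) = h (x + t *\<^sub>R axis i 1)) (nhds (0::real))"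
    using eventually_line[OF assms(1,2), of i] assms(3) by (auto elim: eventually_mono)
  show "pd i f x = pd i h x" unfolding pd_def by (rule deriv_cong_ev[OF ev refl])
  assume "lined i f x"
  then have "((\<lambda>t. h (x + t *\<^sub>R axis i 1)) has_real_derivative pd i f x) (at 0)"
    using pd_D DERIV_cong_ev[OF refl ev refl] by blast
  then show "lined i h x" using pd_I by blast
qed


lemma Ck_mono: "Ck (Suc k) U f \<Longrightarrow> Ck k U f"
  by (induction k arbitrary: f) auto

lemma Ck_cont: "Ck k U f \<Longrightarrow> continuous_on U f"
  by (cases k) auto

lemma Ck_lined: "Ck (Suc k) U f \<Longrightarrow> x \<in> U \<Longrightarrow> lined i f x"
  by (simp add: lined_def)

lemma Ck_pd: "Ck (Suc k) U f \<Longrightarrow> Ck k U (pd i f)"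
  by simp

lemma Ck_SucI: "continuous_on U f \<Longrightarrow> (\<And>i x. x \<in> U \<Longrightarrow> lined i f x) \<Longrightarrow> (\<And>i. Ck k U (pd i f))
   \<Longrightarrow> Ck (Suc k) U f"
  by (simp add: lined_def)

lemma Ck_cong: "open U \<Longrightarrow> \<forall>y\<in>U. f y = h y \<Longrightarrow> Ck k U f \<Longrightarrow> Ck k U h"
proof (induction k arbitrary: f h)
  case 0
  then show ?case using continuous_on_cong by force
next
  case (Suc k)
  show ?case
  proof (rule Ck_SucI)
    show "continuous_on U h" using Suc.prems continuous_on_cong by force
    fix i x assume x: "x \<in> U"
    have "lined i f x" using Ck_lined[OF Suc.prems(3) x] .
    then show "lined i h x" using pd_local(2)[OF Suc.prems(1) x Suc.prems(2)] by blast
  next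
    fix i
    have "\<forall>y\<in>U. pd i f y = pd i h y" using pd_local(1)[OF Suc.prems(1) _ Suc.prems(2)] by blast
    then show "Ck k U (pd i h)" using Suc.IH[of "pd i f" "pd i h"] Suc.prems by simp
  qed
qed

lemma Ck_const: "Ck k U (\<lambda>y. c)"
proof (induction k arbitrary: c)
  case 0 then show ?case by simp
next
  case (Suc k)
  have e: "pd i (\<lambda>y. c) = (\<lambda>y. 0)" for i unfolding fun_eq_iff using pd_const by blast
  show ?case
  proof (rule Ck_SucI)
    show "continuous_on U (\<lambda>y. c)" by (rule continuous_on_const)
    show "lined i (\<lambda>y. c) x" for i x using pd_const by blast
    show "Ck k U (pd i (\<lambda>y. c))" for i unfolding e by (rule Suc.IH)
  qed
qed

lemma Ck_add: "open U \<Longrightarrow> Ck k U f \<Longrightarrow> Ck k U h \<Longrightarrow> Ck k U (\<lambda>y. f y + h y)"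
proof (induction k arbitrary: f h)
  case 0 then show ?case using continuous_on_add by auto
next
  case (Suc k)
  show ?case
  proof (rule Ck_SucI)
    show "continuous_on U (\<lambda>y. f y + h y)" by (rule continuous_on_add[OF Ck_cont[OF Suc.prems(2)] Ck_cont[OF Suc.prems(3)]])
    show "lined i (\<lambda>y. f y + h y) x" if "x \<in> U" for i x
      using pd_add[OF Ck_lined[OF Suc.prems(2) that] Ck_lined[OF Suc.prems(3) that]] by blast
    fix i
    have "\<forall>y\<in>U. pd i f y + pd i h y = pd i (\<lambda>y. f y + h y) y"
    proof
      fix y assume y: "y \<in> U"
      show "pd i f y + pd i h y = pd i (\<lambda>y. f y + h y) y"
        using pd_add[OF Ck_lined[OF Suc.prems(2) y] Ck_lined[OF Suc.prems(3) y]] by simp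
    qed
    moreover have "Ck k U (\<lambda>y. pd i f y + pd i h y)"
      using Suc.IH[OF Suc.prems(1) Ck_pd[OF Suc.prems(2)] Ck_pd[OF Suc.prems(3)]] .
    ultimately show "Ck k U (pd i (\<lambda>y. f y + h y))" by (rule Ck_cong[OF Suc.prems(1)])
  qed
qed

lemma Ck_mult: "open U \<Longrightarrow> Ck k U f \<Longrightarrow> Ck k U h \<Longrightarrow> Ck k U (\<lambda>y. f y * h y)"
proof (induction k arbitrary: f h)
  case 0 then show ?case using continuous_on_mult by auto
next
  case (Suc k)
  show ?case
  proof (rule Ck_SucI)
    show "continuous_on U (\<lambda>y. f y * h y)" by (rule continuous_on_mult[OF Ck_cont[OF Suc.prems(2)] Ck_cont[OF Suc.prems(3)]])
    show "lined i (\<lambda>y. f y * h y) x" if "x \<in> U" for i x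
      using pd_mult[OF Ck_lined[OF Suc.prems(2) that] Ck_lined[OF Suc.prems(3) that]] by blast
    fix i
    have "\<forall>y\<in>U. pd i f y * h y + f y * pd i h y = pd i (\<lambda>y. f y * h y) y"
    proof
      fix y assume y: "y \<in> U"
      show "pd i f y * h y + f y * pd i h y = pd i (\<lambda>y. f y * h y) y"
        using pd_mult[OF Ck_lined[OF Suc.prems(2) y] Ck_lined[OF Suc.prems(3) y]] by simp
    qed
    moreover have "Ck k U (\<lambda>y. pd i f y * h y + f y * pd i h y)"
      using Ck_add[OF Suc.prems(1) Suc.IH[OF Suc.prems(1) Ck_pd[OF Suc.prems(2)] Ck_mono[OF Suc.prems(3)]]
         Suc.IH[OF Suc.prems(1) Ck_mono[OF Suc.prems(2)] Ck_pd[OF Suc.prems(3)]]] .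
    ultimately show "Ck k U (pd i (\<lambda>y. f y * h y))" by (rule Ck_cong[OF Suc.prems(1)])
  qed
qed

lemma Ck_inverse: "open U \<Longrightarrow> \<forall>y\<in>U. f y \<noteq> 0 \<Longrightarrow> Ck k U f \<Longrightarrow> Ck k U (\<lambda>y. inverse (f y))"
proof (induction k arbitrary: f)
  case 0 then show ?case by (simp add: continuous_on_inverse)
next
  case (Suc k)
  show ?case
  proof (rule Ck_SucI)
    show "continuous_on U (\<lambda>y. inverse (f y))" using continuous_on_inverse[OF Ck_cont[OF Suc.prems(3)]] Suc.prems(2) by blast
    show "lined i (\<lambda>y. inverse (f y)) x" if "x \<in> U" for i x
      using pd_inverse[OF Ck_lined[OF Suc.prems(3) that]] Suc.prems(2) that by blast
    fix i
    have "\<forall>y\<in>U. (pd i f y * (-1)) * (inverse (f y) * inverse (f y)) = pd i (\<lambda>y. inverse (f y)) y"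
    proof
      fix y assume y: "y \<in> U"
      show "(pd i f y * (-1)) * (inverse (f y) * inverse (f y)) = pd i (\<lambda>y. inverse (f y)) y"
        using pd_inverse[OF Ck_lined[OF Suc.prems(3) y]] Suc.prems(2) y by (simp add: power2_eq_square)
    qed
    moreover have "Ck k U (\<lambda>y. (pd i f y * (-1)) * (inverse (f y) * inverse (f y)))"
    proof -
      have a: "Ck k U (\<lambda>y. inverse (f y))" using Suc.IH[OF Suc.prems(1,2) Ck_mono[OF Suc.prems(3)]] .
      have b: "Ck k U (\<lambda>y. pd i f y * (-1))" using Ck_mult[OF Suc.prems(1) Ck_pd[OF Suc.prems(3)] Ck_const] .
      show ?thesis using Ck_mult[OF Suc.prems(1) b Ck_mult[OF Suc.prems(1) a a]] .
    qed
    ultimately show "Ck k U (pd i (\<lambda>y. inverse (f y)))" by (rule Ck_cong[OF Suc.prems(1)])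
  qed
qed

lemma smooth_cong: "open U \<Longrightarrow> \<forall>y\<in>U. f y = h y \<Longrightarrow> smooth_fun U f \<Longrightarrow> smooth_fun U h"
  unfolding smooth_fun_def using Ck_cong by blast
lemma smooth_const: "smooth_fun U (\<lambda>y. c)"
  unfolding smooth_fun_def using Ck_const by blast
lemma smooth_add: "open U \<Longrightarrow> smooth_fun U f \<Longrightarrow> smooth_fun U h \<Longrightarrow> smooth_fun U (\<lambda>y. f y + h y)"
  unfolding smooth_fun_def using Ck_add by blast
lemma smooth_mult: "open U \<Longrightarrow> smooth_fun U f \<Longrightarrow> smooth_fun U h \<Longrightarrow> smooth_fun U (\<lambda>y. f y * h y)"
  unfolding smooth_fun_def using Ck_mult by blast
lemma smooth_inverse: "open U \<Longrightarrow> \<forall>y\<in>U. f y \<noteq> 0 \<Longrightarrow> smooth_fun U f \<Longrightarrow> smooth_fun U (\<lambda>y. inverse (f y))"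
  unfolding smooth_fun_def using Ck_inverse by blast
lemma smooth_pd: "smooth_fun U f \<Longrightarrow> smooth_fun U (pd i f)"
  unfolding smooth_fun_def using Ck_pd by blast
lemma smooth_lined: "smooth_fun U f \<Longrightarrow> x \<in> U \<Longrightarrow> lined i f x"
  unfolding smooth_fun_def using Ck_lined by blast
lemma smooth_minus: "open U \<Longrightarrow> smooth_fun U f \<Longrightarrow> smooth_fun U (\<lambda>y. - f y)"
proof -
  assume a: "open U" "smooth_fun U f"
  have "smooth_fun U (\<lambda>y. (-1) * f y)" by (rule smooth_mult[OF a(1) smooth_const a(2)])
  then show ?thesis by simp
qed
lemma smooth_diff: "open U \<Longrightarrow> smooth_fun U f \<Longrightarrow> smooth_fun U h \<Longrightarrow> smooth_fun U (\<lambda>y. f y - h y)"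
  using smooth_add[of U f "\<lambda>y. - h y"] smooth_minus[of U h] by simp
lemma smooth_divide: "open U \<Longrightarrow> \<forall>y\<in>U. h y \<noteq> 0 \<Longrightarrow> smooth_fun U f \<Longrightarrow> smooth_fun U h \<Longrightarrow> smooth_fun U (\<lambda>y. f y / h y)"
  using smooth_mult[of U f "\<lambda>y. inverse (h y)"] smooth_inverse[of U h] by (simp add: divide_inverse)
lemma smooth_sum: assumes "open U" "finite A" "\<forall>a\<in>A. smooth_fun U (f a)"
  shows "smooth_fun U (\<lambda>y. \<Sum>a\<in>A. f a y)"
  using assms(2,3) by (induction A rule: finite_induct) (auto simp: smooth_const smooth_add[OF assms(1)])
lemma smooth_prod: assumes "open U" "finite A" "\<forall>a\<in>A. smooth_fun U (f a)"
  shows "smooth_fun U (\<lambda>y. \<Prod>a\<in>A. f a y)"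
  using assms(2,3) by (induction A rule: finite_induct) (auto simp: smooth_const smooth_mult[OF assms(1)])


lemma metric_invertible:
  assumes "riem_metric U g" "x \<in> U"
  shows "invertible (g x)"
proof -
  have pos: "\<And>\<xi>. \<xi> \<noteq> 0 \<Longrightarrow> \<xi> \<bullet> (g x *v \<xi>) > 0" using assms unfolding riem_metric_def by blast
  have "inj ((*v) (g x))"
  proof (rule injI)
    fix a b assume "g x *v a = g x *v b"
    then have "g x *v (a - b) = 0" by (simp add: matrix_vector_mult_diff_distrib)
    then show "a = b" using pos[of "a - b"] by (cases "a - b = 0") auto
  qed
  then show ?thesis using matrix_left_invertible_injective invertible_left_inverse by blast
qed

lemma ginv_props:
  assumes "riem_metric U g" "x \<in> U"
  shows "ginv g x ** g x = mat 1" "g x ** ginv g x = mat 1"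
proof -
  have "\<exists>A'. g x ** A' = mat 1 \<and> A' ** g x = mat 1"
    using metric_invertible[OF assms] unfolding invertible_def by blast
  then have "g x ** ginv g x = mat 1 \<and> ginv g x ** g x = mat 1"
    unfolding ginv_def matrix_inv_def by (rule someI_ex)
  then show "ginv g x ** g x = mat 1" "g x ** ginv g x = mat 1" by auto
qed

lemma g_sym: assumes "riem_metric U g" "x \<in> U" shows "g x $ i $ j = g x $ j $ i"
proof -
  have "transpose (g x) = g x" using assms unfolding riem_metric_def by blast
  then have "transpose (g x) $ j $ i = g x $ j $ i" by simp
  then show ?thesis by (simp add: transpose_def)
qed

lemma ginv_sym:
  assumes "riem_metric U g" "x \<in> U"
  shows "ginv g x $ i $ j = ginv g x $ j $ i"
proof -
  have t: "transpose (g x) = g x" using assms unfolding riem_metric_def by blast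
  have "transpose (ginv g x) ** g x = transpose (transpose (g x) ** ginv g x)"
    by (simp add: matrix_transpose_mul)
  also have "\<dots> = mat 1" using ginv_props(2)[OF assms] t by simp
  finally have a: "transpose (ginv g x) ** g x = mat 1" .
  have "transpose (ginv g x) = transpose (ginv g x) ** (g x ** ginv g x)"
    using ginv_props(2)[OF assms] by simp
  also have "\<dots> = ginv g x" using a by (simp add: matrix_mul_assoc)
  finally have "transpose (ginv g x) = ginv g x" .
  then have "transpose (ginv g x) $ j $ i = ginv g x $ j $ i" by simp
  then show ?thesis by (simp add: transpose_def)
qed

lemma ginv_left: "riem_metric U g \<Longrightarrow> x \<in> U \<Longrightarrow>
  (\<Sum>l\<in>UNIV. ginv g x $ i $ l * g x $ l $ j) = (if i = j then 1 else 0)"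
  using ginv_props(1)[of U g x] by (simp add: matrix_matrix_mult_def mat_def vec_eq_iff)

lemma ginv_right: "riem_metric U g \<Longrightarrow> x \<in> U \<Longrightarrow>
  (\<Sum>l\<in>UNIV. g x $ i $ l * ginv g x $ l $ j) = (if i = j then 1 else 0)"
  using ginv_props(2)[of U g x] by (simp add: matrix_matrix_mult_def mat_def vec_eq_iff)

lemma smooth_if: "smooth_fun U f \<Longrightarrow> smooth_fun U h \<Longrightarrow> smooth_fun U (\<lambda>y. if P then f y else h y)"
  by (cases P) auto

lemma det_smooth:
  fixes M :: "real^'n::finite \<Rightarrow> real^'n^'n"
  assumes "open U" "\<And>i j. smooth_fun U (\<lambda>y. M y $ i $ j)"
  shows "smooth_fun U (\<lambda>y. det (M y))"
proof -
  have "smooth_fun U (\<lambda>y. \<Sum>p\<in>{p. p permutes (UNIV::'n set)}. of_int (sign p) * (\<Prod>i\<in>UNIV. M y $ i $ p i))"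
  proof (rule smooth_sum[OF assms(1)])
    show "finite {p. p permutes (UNIV::'n set)}" by (simp add: finite_permutations)
    show "\<forall>p\<in>{p. p permutes UNIV}. smooth_fun U (\<lambda>y. of_int (sign p) * (\<Prod>i\<in>UNIV. M y $ i $ p i))"
    proof
      fix p :: "'n \<Rightarrow> 'n"
      have "smooth_fun U (\<lambda>y. \<Prod>i\<in>UNIV. M y $ i $ p i)"
        by (rule smooth_prod[OF assms(1)]) (simp_all add: assms(2))
      then show "smooth_fun U (\<lambda>y. of_int (sign p) * (\<Prod>i\<in>UNIV. M y $ i $ p i))"
        by (rule smooth_mult[OF assms(1) smooth_const])
    qed
  qed
  then show ?thesis unfolding det_def .
qed

lemma ginv_cramer:
  assumes "riem_metric U g" "x \<in> U"
  shows "ginv g x $ k $ j = det (\<chi> i l. if l = k then (if i = j then 1 else 0) else g x $ i $ l) / det (g x)"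
proof -
  let ?b = "axis j (1::real)"
  have d: "det (g x) \<noteq> 0" using metric_invertible[OF assms] invertible_det_nz by blast
  have "g x *v (ginv g x *v ?b) = ?b"
    by (simp add: matrix_vector_mul_assoc ginv_props(2)[OF assms])
  then have "ginv g x *v ?b = (\<chi> k. det(\<chi> i l. if l=k then ?b$i else g x$i$l) / det (g x))"
    by (rule cramer[OF d, THEN iffD1])
  then have A: "(ginv g x *v ?b) $ k = det(\<chi> i l. if l=k then ?b$i else g x$i$l) / det (g x)" by simp
  have C: "(\<chi> i l. if l=k then ?b$i else g x$i$l) = (\<chi> i l. if l = k then (if i = j then 1 else 0) else g x $ i $ l)"
    by (simp add: axis_def vec_eq_iff)
  have B: "(ginv g x *v ?b) $ k = ginv g x $ k $ j"
    unfolding matrix_vector_mult_def axis_def by (simp add: if_distrib[of "\<lambda>t. _ * t"] cong: if_cong)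
  have "ginv g x $ k $ j = det(\<chi> i l. if l=k then ?b$i else g x$i$l) / det (g x)" using A B by simp
  then show ?thesis unfolding C .
qed

lemma ginv_smooth:
  assumes "open U" "riem_metric U g"
  shows "smooth_fun U (\<lambda>y. ginv g y $ k $ j)"
proof -
  have gs: "smooth_fun U (\<lambda>y. g y $ i $ l)" for i l using assms(2) unfolding riem_metric_def by blast
  have "smooth_fun U (\<lambda>y. det (\<chi> i l. if l = k then (if i = j then 1 else 0) else g y $ i $ l) / det (g y))"
  proof (rule smooth_divide[OF assms(1)])
    show "\<forall>y\<in>U. det (g y) \<noteq> 0" using metric_invertible[OF assms(2)] invertible_det_nz by blast
    show "smooth_fun U (\<lambda>y. det (g y))" by (rule det_smooth[OF assms(1) gs])
    show "smooth_fun U (\<lambda>y. det (\<chi> i l. if l = k then (if i = j then 1 else 0) else g y $ i $ l))"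
    proof (rule det_smooth[OF assms(1)])
      fix a b
      show "smooth_fun U (\<lambda>y. (\<chi> i l. if l = k then (if i = j then 1 else 0) else g y $ i $ l) $ a $ b)"
        by (cases "b = k") (simp_all add: smooth_const gs)
    qed
  qed
  moreover have "\<forall>y\<in>U. det (\<chi> i l. if l = k then (if i = j then 1 else 0) else g y $ i $ l) / det (g y) = ginv g y $ k $ j"
  proof
    fix y assume "y \<in> U"
    show "det (\<chi> i l. if l = k then (if i = j then 1 else 0) else g y $ i $ l) / det (g y) = ginv g y $ k $ j"
      by (rule ginv_cramer[OF assms(2) \<open>y \<in> U\<close>, symmetric])
  qed
  ultimately show ?thesis by (rule smooth_cong[OF assms(1), rotated])
qed


lemma sum_delta_r [simp]: "(\<Sum>l\<in>(UNIV::'n::finite set). f l * (if l = b then 1 else 0)) = (f b :: real)"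
proof -
  have "(\<Sum>l\<in>(UNIV::'n set). f l * (if l = b then 1 else 0)) = (\<Sum>l\<in>UNIV. if l = b then f l else 0)"
    by (intro sum.cong) auto
  then show ?thesis by simp
qed

lemma sum_delta_l [simp]: "(\<Sum>l\<in>(UNIV::'n::finite set). (if l = b then 1 else 0) * f l) = (f b :: real)"
  using sum_delta_r[of f b] by (simp add: mult.commute)

lemma sum_delta_r2 [simp]: "(\<Sum>l\<in>(UNIV::'n::finite set). f l * (if b = l then 1 else 0)) = (f b :: real)"
  using sum_delta_r[of f b] by (simp add: eq_commute)
lemma sum_delta_l2 [simp]: "(\<Sum>l\<in>(UNIV::'n::finite set). (if b = l then 1 else 0) * f l) = (f b :: real)"
  using sum_delta_l[of b f] by (simp add: eq_commute)
lemma sum_if_out [simp]: "(\<Sum>j\<in>A. if P then f j else 0) = (if P then sum f A else 0)"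
  by simp

lemma pd_sum_mult:
  assumes "finite A" "\<And>a. a \<in> A \<Longrightarrow> lined i (f a) x" "\<And>a. a \<in> A \<Longrightarrow> lined i (h a) x"
  shows "pd i (\<lambda>y. \<Sum>a\<in>A. f a y * h a y) x = (\<Sum>a\<in>A. pd i (f a) x * h a x + f a x * pd i (h a) x)"
    "lined i (\<lambda>y. \<Sum>a\<in>A. f a y * h a y) x"
proof -
  have l: "\<forall>a\<in>A. lined i (\<lambda>y. f a y * h a y) x" using pd_mult assms(2,3) by blast
  have "pd i (\<lambda>y. \<Sum>a\<in>A. f a y * h a y) x = (\<Sum>a\<in>A. pd i (\<lambda>y. f a y * h a y) x)"
    using pd_sum[OF assms(1) l] by blast
  also have "\<dots> = (\<Sum>a\<in>A. pd i (f a) x * h a x + f a x * pd i (h a) x)"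
  proof (rule sum.cong[OF refl])
    fix a assume a: "a \<in> A"
    show "pd i (\<lambda>y. f a y * h a y) x = pd i (f a) x * h a x + f a x * pd i (h a) x"
      using pd_mult[OF assms(2)[OF a] assms(3)[OF a]] by blast
  qed
  finally show "pd i (\<lambda>y. \<Sum>a\<in>A. f a y * h a y) x = (\<Sum>a\<in>A. pd i (f a) x * h a x + f a x * pd i (h a) x)" .
  show "lined i (\<lambda>y. \<Sum>a\<in>A. f a y * h a y) x" using pd_sum[OF assms(1) l] by blast
qed

lemma pd_ginv:
  assumes U: "open U" and g: "riem_metric U g" and x: "x \<in> U"
  shows "pd k (\<lambda>y. ginv g y $ a $ b) x =
     - (\<Sum>c\<in>UNIV. \<Sum>d\<in>UNIV. ginv g x $ a $ c * pd k (\<lambda>y. g y $ c $ d) x * ginv g x $ d $ b)"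
proof -
  have gs: "smooth_fun U (\<lambda>y. g y $ i $ l)" for i l using g unfolding riem_metric_def by blast
  have hs: "smooth_fun U (\<lambda>y. ginv g y $ i $ l)" for i l by (rule ginv_smooth[OF U g])
  define dH where "dH l = pd k (\<lambda>y. ginv g y $ a $ l) x" for l
  define dG where "dG l d = pd k (\<lambda>y. g y $ l $ d) x" for l d
  define H where "H i l = ginv g x $ i $ l" for i l
  define G where "G i l = g x $ i $ l" for i l
  have E: "(\<Sum>l\<in>UNIV. dH l * G l d + H a l * dG l d) = 0" for d
  proof -
    have "pd k (\<lambda>y. \<Sum>l\<in>UNIV. ginv g y $ a $ l * g y $ l $ d) x = (\<Sum>l\<in>UNIV. dH l * G l d + H a l * dG l d)"
      unfolding dH_def G_def H_def dG_def
      by (rule pd_sum_mult(1)) (auto intro: smooth_lined[OF hs x] smooth_lined[OF gs x])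
    moreover have "pd k (\<lambda>y. \<Sum>l\<in>UNIV. ginv g y $ a $ l * g y $ l $ d) x = pd k (\<lambda>y. if a = d then 1 else 0) x"
      by (rule pd_local(1)[OF U x]) (simp add: ginv_left[OF g])
    moreover have "pd k (\<lambda>y. if a = d then 1 else 0 :: real) x = 0" using pd_const by blast
    ultimately show ?thesis by simp
  qed
  have GH: "(\<Sum>d\<in>UNIV. G l d * H d b) = (if l = b then 1 else 0)" for l
    unfolding G_def H_def by (rule ginv_right[OF g x])
  have "dH b = (\<Sum>l\<in>UNIV. dH l * (if l = b then 1 else 0))" by (rule sum_delta_r[symmetric])
  also have "\<dots> = (\<Sum>l\<in>UNIV. \<Sum>d\<in>UNIV. dH l * G l d * H d b)"
    by (simp add: GH[symmetric] sum_distrib_left mult.assoc)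
  also have "\<dots> = (\<Sum>d\<in>UNIV. (\<Sum>l\<in>UNIV. dH l * G l d) * H d b)"
    by (subst sum.swap) (simp add: sum_distrib_right)
  also have "\<dots> = (\<Sum>d\<in>UNIV. (- (\<Sum>l\<in>UNIV. H a l * dG l d)) * H d b)"
  proof (rule sum.cong[OF refl])
    fix d
    have "(\<Sum>l\<in>UNIV. dH l * G l d) = - (\<Sum>l\<in>UNIV. H a l * dG l d)"
      using E[of d] by (simp add: sum.distrib eq_neg_iff_add_eq_0)
    then show "(\<Sum>l\<in>UNIV. dH l * G l d) * H d b = (- (\<Sum>l\<in>UNIV. H a l * dG l d)) * H d b" by simp
  qed
  also have "\<dots> = - (\<Sum>c\<in>UNIV. \<Sum>d\<in>UNIV. H a c * dG c d * H d b)"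
    by (subst sum.swap) (simp add: sum_distrib_right sum_negf)
  finally show ?thesis unfolding dH_def H_def dG_def .
qed


lemma swap_in1: "(\<Sum>i\<in>A. \<Sum>j\<in>B. \<Sum>k\<in>C. f i j k) = (\<Sum>i\<in>A. \<Sum>k\<in>C. \<Sum>j\<in>B. f i j k)"
  by (rule sum.cong[OF refl], rule sum.swap)

lemma swap_in2: "(\<Sum>i\<in>A. \<Sum>j\<in>B. \<Sum>k\<in>C. \<Sum>l\<in>D. f i j k l) = (\<Sum>i\<in>A. \<Sum>j\<in>B. \<Sum>l\<in>D. \<Sum>k\<in>C. f i j k l)"
  by (rule sum.cong[OF refl], rule sum.cong[OF refl], rule sum.swap)

lemma sw4: "(\<Sum>i\<in>A. \<Sum>j\<in>B. \<Sum>k\<in>C. \<Sum>l\<in>D. f i j k l) = (\<Sum>k\<in>C. \<Sum>l\<in>D. \<Sum>i\<in>A. \<Sum>j\<in>B. f i j k l)"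
proof -
  have "(\<Sum>i\<in>A. \<Sum>j\<in>B. \<Sum>k\<in>C. \<Sum>l\<in>D. f i j k l) = (\<Sum>i\<in>A. \<Sum>k\<in>C. \<Sum>j\<in>B. \<Sum>l\<in>D. f i j k l)"
    by (rule swap_in1)
  also have "\<dots> = (\<Sum>i\<in>A. \<Sum>k\<in>C. \<Sum>l\<in>D. \<Sum>j\<in>B. f i j k l)" by (rule swap_in2)
  also have "\<dots> = (\<Sum>k\<in>C. \<Sum>i\<in>A. \<Sum>l\<in>D. \<Sum>j\<in>B. f i j k l)" by (rule sum.swap)
  also have "\<dots> = (\<Sum>k\<in>C. \<Sum>l\<in>D. \<Sum>i\<in>A. \<Sum>j\<in>B. f i j k l)" by (rule swap_in1)
  finally show ?thesis .
qed

lemma sw3: "(\<Sum>i\<in>A. \<Sum>j\<in>B. \<Sum>k\<in>C. f i j k) = (\<Sum>k\<in>C. \<Sum>i\<in>A. \<Sum>j\<in>B. f i j k)"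
proof -
  have "(\<Sum>i\<in>A. \<Sum>j\<in>B. \<Sum>k\<in>C. f i j k) = (\<Sum>i\<in>A. \<Sum>k\<in>C. \<Sum>j\<in>B. f i j k)"
    by (rule swap_in1)
  also have "\<dots> = (\<Sum>k\<in>C. \<Sum>i\<in>A. \<Sum>j\<in>B. f i j k)" by (rule sum.swap)
  finally show ?thesis .
qed

locale alg =
  fixes G H :: "'n::finite \<Rightarrow> 'n \<Rightarrow> real" and dG :: "'n \<Rightarrow> 'n \<Rightarrow> 'n \<Rightarrow> real"
    and w :: "'n \<Rightarrow> real" and dw :: "'n \<Rightarrow> 'n \<Rightarrow> real"
  assumes HG: "\<And>i j. (\<Sum>l\<in>UNIV. H i l * G l j) = (if i = j then 1 else 0)"
    and GH: "\<And>i j. (\<Sum>l\<in>UNIV. G i l * H l j) = (if i = j then 1 else 0)"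
    and Gs: "\<And>i j. G i j = G j i" and Hs: "\<And>i j. H i j = H j i"
    and dGs: "\<And>k i j. dG k i j = dG k j i"
begin

definition "Gam k i j = (1/2) * (\<Sum>l\<in>UNIV. H k l * (dG i j l + dG j i l - dG l i j))"
definition "W k = (\<Sum>l\<in>UNIV. H k l * w l)"
definition "dH k a b = - (\<Sum>c\<in>UNIV. \<Sum>d\<in>UNIV. H a c * dG k c d * H d b)"
definition "dW k' k = (\<Sum>l\<in>UNIV. dH k' k l * w l + H k l * dw k' l)"
definition "T k i j = - ((if k = j then w i else 0) + (if k = i then w j else 0) - G i j * W k)"
definition "dT k' k i j = - ((if k = j then dw k' i else 0) + (if k = i then dw k' j else 0)
      - (dG k' i j * W k + G i j * dW k' k))"
definition "Dric i j = (\<Sum>k\<in>UNIV. dT k k i j - dT j k i k + (\<Sum>l\<in>UNIV.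
      Gam k k l * T l i j + T k k l * Gam l i j + T k k l * T l i j
    - Gam k j l * T l i k - T k j l * Gam l i k - T k j l * T l i k))"


lemma mult_if0 [simp]: "(a::real) * (if P then x else 0) = (if P then a * x else 0)"
  "(if P then x else 0) * (a::real) = (if P then x * a else 0)" by auto

lemma GHv: "(\<Sum>k\<in>UNIV. G i k * (\<Sum>l\<in>UNIV. H k l * f l)) = f i"
proof -
  have "(\<Sum>k\<in>UNIV. G i k * (\<Sum>l\<in>UNIV. H k l * f l)) = (\<Sum>k\<in>UNIV. \<Sum>l\<in>UNIV. G i k * H k l * f l)"
    by (simp add: sum_distrib_left mult.assoc)
  also have "\<dots> = (\<Sum>l\<in>UNIV. (\<Sum>k\<in>UNIV. G i k * H k l) * f l)"
    by (subst sum.swap) (simp add: sum_distrib_right)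
  also have "\<dots> = f i" by (simp add: GH)
  finally show ?thesis .
qed

lemma GW: "(\<Sum>k\<in>UNIV. G i k * W k) = w i"
proof -
  have "(\<Sum>k\<in>UNIV. G i k * W k) = (\<Sum>k\<in>UNIV. \<Sum>l\<in>UNIV. G i k * H k l * w l)"
    by (simp add: W_def sum_distrib_left mult.assoc)
  also have "\<dots> = (\<Sum>l\<in>UNIV. (\<Sum>k\<in>UNIV. G i k * H k l) * w l)"
    by (subst sum.swap) (simp add: sum_distrib_right)
  also have "\<dots> = w i" by (simp add: GH)
  finally show ?thesis .
qed

lemma trHG: "(\<Sum>i\<in>UNIV. \<Sum>j\<in>UNIV. H i j * G i j) = real CARD('n)"
proof -
  have "(\<Sum>i\<in>UNIV. \<Sum>j\<in>UNIV. H i j * G i j) = (\<Sum>i\<in>UNIV. \<Sum>j\<in>UNIV. H i j * G j i)"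
    by (simp add: Gs)
  also have "\<dots> = (\<Sum>i\<in>(UNIV::'n set). 1)" by (simp add: HG)
  finally show ?thesis by simp
qed

lemma T_trace: "(\<Sum>k\<in>UNIV. T k i k) = - real CARD('n) * w i"
proof -
  have "T k i k = G i k * W k - w i - (if k = i then w k else 0)" for k by (simp add: T_def)
  then have "(\<Sum>k\<in>UNIV. T k i k) = (\<Sum>k\<in>UNIV. G i k * W k) - (\<Sum>k\<in>(UNIV::'n set). w i) - (\<Sum>k\<in>UNIV. if k = i then w k else 0)"
    by (simp add: sum_subtractf)
  then show ?thesis by (simp add: GW)
qed

lemma HT: "(\<Sum>i\<in>UNIV. \<Sum>j\<in>UNIV. H i j * T l i j) = (real CARD('n) - 2) * W l"
proof -
  have a: "(\<Sum>i\<in>UNIV. \<Sum>j\<in>UNIV. H i j * (if l = j then w i else 0)) = W l"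
    by (simp add: W_def Hs if_distrib[of "\<lambda>t. _ * t"] cong: if_cong)
  have b: "(\<Sum>i\<in>UNIV. \<Sum>j\<in>UNIV. H i j * (if l = i then w j else 0)) = W l"
    by (simp add: W_def if_distrib[of "\<lambda>t. _ * t"] cong: if_cong)
  have c: "(\<Sum>i\<in>UNIV. \<Sum>j\<in>UNIV. H i j * (G i j * W l)) = real CARD('n) * W l"
    using trHG by (simp add: sum_distrib_right[symmetric] mult.assoc[symmetric])
  have "(\<Sum>i\<in>UNIV. \<Sum>j\<in>UNIV. H i j * T l i j) =
    - ((\<Sum>i\<in>UNIV. \<Sum>j\<in>UNIV. H i j * (if l = j then w i else 0))
     + (\<Sum>i\<in>UNIV. \<Sum>j\<in>UNIV. H i j * (if l = i then w j else 0))
     - (\<Sum>i\<in>UNIV. \<Sum>j\<in>UNIV. H i j * (G i j * W l)))"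
    by (simp add: T_def sum.distrib sum_subtractf sum_negf algebra_simps)
  also have "\<dots> = (real CARD('n) - 2) * W l" using a b c by (simp add: algebra_simps)
  finally show ?thesis .
qed

lemma T_alt: "T k i j = G i j * W k - (if k = j then w i else 0) - (if k = i then w j else 0)"
  by (simp add: T_def)

lemma T_sym: "T k i j = T k j i"
  by (simp add: T_alt Gs)

lemma Gam_sym: "Gam k i j = Gam k j i"
  unfolding Gam_def by (simp add: dGs add.commute)

lemma GdH: "(\<Sum>k\<in>UNIV. G i k * dH j k l) = - (\<Sum>d\<in>UNIV. dG j i d * H d l)"
proof -
  have "(\<Sum>k\<in>UNIV. G i k * dH j k l) = - (\<Sum>k\<in>UNIV. G i k * (\<Sum>c\<in>UNIV. H k c * (\<Sum>d\<in>UNIV. dG j c d * H d l)))"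
    by (simp add: dH_def sum_negf sum_distrib_left mult.assoc)
  also have "\<dots> = - (\<Sum>d\<in>UNIV. dG j i d * H d l)" by (simp add: GHv)
  finally show ?thesis .
qed

lemma dT_trace: "(\<Sum>k\<in>UNIV. dT j k i k) = - real CARD('n) * dw j i"
proof -
  have a: "(\<Sum>k\<in>UNIV. G i k * (\<Sum>l\<in>UNIV. dH j k l * w l)) = - (\<Sum>d\<in>UNIV. dG j i d * W d)"
  proof -
    have "(\<Sum>k\<in>UNIV. G i k * (\<Sum>l\<in>UNIV. dH j k l * w l)) = (\<Sum>l\<in>UNIV. (\<Sum>k\<in>UNIV. G i k * dH j k l) * w l)"
      by (simp add: sum_distrib_left sum_distrib_right mult.assoc) (rule sum.swap)
    also have "\<dots> = (\<Sum>l\<in>UNIV. - (\<Sum>d\<in>UNIV. dG j i d * H d l) * w l)" by (simp add: GdH)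
    also have "\<dots> = - (\<Sum>d\<in>UNIV. dG j i d * W d)"
      by (simp add: W_def sum_distrib_left sum_distrib_right sum_negf mult.assoc) (rule sum.swap)
    finally show ?thesis .
  qed
  have b: "(\<Sum>k\<in>UNIV. G i k * (\<Sum>l\<in>UNIV. H k l * dw j l)) = dw j i" by (rule GHv)
  have e: "(\<Sum>k\<in>UNIV. dG j i k * W k + G i k * dW j k) = dw j i"
  proof -
    have "(\<Sum>k\<in>UNIV. dG j i k * W k + G i k * dW j k) = (\<Sum>k\<in>UNIV. dG j i k * W k)
       + (\<Sum>k\<in>UNIV. G i k * (\<Sum>l\<in>UNIV. dH j k l * w l)) + (\<Sum>k\<in>UNIV. G i k * (\<Sum>l\<in>UNIV. H k l * dw j l))"
      by (simp add: dW_def sum.distrib distrib_left)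
    then show ?thesis using a b by simp
  qed
  have "dT j k i k = (dG j i k * W k + G i k * dW j k) - dw j i - (if k = i then dw j k else 0)" for k
    by (simp add: dT_def)
  then have "(\<Sum>k\<in>UNIV. dT j k i k) = (\<Sum>k\<in>UNIV. dG j i k * W k + G i k * dW j k) - (\<Sum>k\<in>(UNIV::'n set). dw j i)
      - (\<Sum>k\<in>UNIV. if k = i then dw j k else 0)"
    by (simp add: sum_subtractf)
  then show ?thesis using e by simp
qed

definition "SHdw = (\<Sum>i\<in>UNIV. \<Sum>j\<in>UNIV. H i j * dw i j)"
definition "PP = (\<Sum>i\<in>UNIV. \<Sum>j\<in>UNIV. \<Sum>k\<in>UNIV. H i j * dG k i j * W k)"
definition "QQ = (\<Sum>k\<in>UNIV. \<Sum>c\<in>UNIV. \<Sum>d\<in>UNIV. H k c * dG k c d * W d)"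
definition "MM = (\<Sum>l\<in>UNIV. \<Sum>i\<in>UNIV. \<Sum>j\<in>UNIV. H i j * Gam l i j * w l)"
definition "ww = (\<Sum>l\<in>UNIV. w l * W l)"

lemma dW_trace: "(\<Sum>k\<in>UNIV. dW k k) = SHdw - QQ"
proof -
  have a: "(\<Sum>k\<in>UNIV. \<Sum>l\<in>UNIV. dH k k l * w l) = - QQ"
  proof -
    have "(\<Sum>k\<in>UNIV. \<Sum>l\<in>UNIV. dH k k l * w l)
        = - (\<Sum>k\<in>UNIV. \<Sum>l\<in>UNIV. \<Sum>c\<in>UNIV. \<Sum>d\<in>UNIV. H k c * dG k c d * H d l * w l)"
      by (simp add: dH_def sum_negf sum_distrib_right)
    also have "\<dots> = - (\<Sum>k\<in>UNIV. \<Sum>c\<in>UNIV. \<Sum>d\<in>UNIV. \<Sum>l\<in>UNIV. H k c * dG k c d * H d l * w l)"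
    proof -
      have *: "(\<Sum>l\<in>UNIV. \<Sum>c\<in>UNIV. \<Sum>d\<in>UNIV. f c d l) = (\<Sum>c\<in>UNIV. \<Sum>d\<in>UNIV. \<Sum>l\<in>UNIV. f c d l)"
        for f :: "'n \<Rightarrow> 'n \<Rightarrow> 'n \<Rightarrow> real"
        by (subst sum.swap) (rule sum.cong[OF refl], rule sum.swap)
      show ?thesis by (rule arg_cong[where f=uminus], rule sum.cong[OF refl], rule *)
    qed
    also have "\<dots> = - QQ"
      by (simp add: QQ_def W_def sum_distrib_left mult.assoc)
    finally show ?thesis .
  qed
  have "(\<Sum>k\<in>UNIV. dW k k) = (\<Sum>k\<in>UNIV. \<Sum>l\<in>UNIV. dH k k l * w l) + SHdw"
    by (simp add: dW_def sum.distrib SHdw_def)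
  then show ?thesis using a by simp
qed

lemma S1: "(\<Sum>i\<in>UNIV. \<Sum>j\<in>UNIV. H i j * (\<Sum>k\<in>UNIV. dT k k i j))
   = (real CARD('n) - 2) * SHdw + PP - real CARD('n) * QQ"
proof -
  have e1: "(\<Sum>k\<in>UNIV. dT k k i j) = (\<Sum>k\<in>UNIV. dG k i j * W k) + G i j * (\<Sum>k\<in>UNIV. dW k k) - dw j i - dw i j" for i j
  proof -
    have "dT k k i j = (dG k i j * W k + G i j * dW k k) - (if k = j then dw k i else 0) - (if k = i then dw k j else 0)" for k
      by (simp add: dT_def)
    then have "(\<Sum>k\<in>UNIV. dT k k i j) = (\<Sum>k\<in>UNIV. dG k i j * W k + G i j * dW k k)
       - (\<Sum>k\<in>UNIV. if k = j then dw k i else 0) - (\<Sum>k\<in>UNIV. if k = i then dw k j else 0)"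
      by (simp add: sum_subtractf)
    then show ?thesis by (simp add: sum.distrib sum_distrib_left)
  qed
  have swapH: "(\<Sum>i\<in>UNIV. \<Sum>j\<in>UNIV. H i j * dw j i) = SHdw"
    unfolding SHdw_def by (subst sum.swap) (simp add: Hs)
  define X where "X = (\<Sum>k\<in>UNIV. dW k k)"
  have pt: "H i j * (\<Sum>k\<in>UNIV. dT k k i j) = H i j * (\<Sum>k\<in>UNIV. dG k i j * W k) + (H i j * G i j) * X
      - H i j * dw j i - H i j * dw i j" for i j
    unfolding e1 X_def by (simp add: algebra_simps)
  have "(\<Sum>i\<in>UNIV. \<Sum>j\<in>UNIV. H i j * (\<Sum>k\<in>UNIV. dT k k i j))
     = (\<Sum>i\<in>UNIV. \<Sum>j\<in>UNIV. H i j * (\<Sum>k\<in>UNIV. dG k i j * W k))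
       + (\<Sum>i\<in>UNIV. \<Sum>j\<in>UNIV. (H i j * G i j) * X)
       - (\<Sum>i\<in>UNIV. \<Sum>j\<in>UNIV. H i j * dw j i) - SHdw"
    unfolding pt by (simp only: sum.distrib sum_subtractf SHdw_def)
  also have "\<dots> = PP + real CARD('n) * (SHdw - QQ) - SHdw - SHdw"
  proof -
    have "(\<Sum>i\<in>UNIV. \<Sum>j\<in>UNIV. (H i j * G i j) * X) = real CARD('n) * (SHdw - QQ)"
      using trHG dW_trace unfolding X_def by (simp add: sum_distrib_right[symmetric])
    moreover have "(\<Sum>i\<in>UNIV. \<Sum>j\<in>UNIV. H i j * (\<Sum>k\<in>UNIV. dG k i j * W k)) = PP"
      by (simp add: PP_def sum_distrib_left mult.assoc)
    ultimately show ?thesis using swapH by simp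
  qed
  finally show ?thesis by (simp add: algebra_simps)
qed

lemma Gam_trace: "(\<Sum>k\<in>UNIV. Gam k k l) = (1/2) * (\<Sum>k\<in>UNIV. \<Sum>a\<in>UNIV. H k a * dG l k a)"
proof -
  have X: "(\<Sum>k\<in>UNIV. \<Sum>a\<in>UNIV. H k a * dG a k l) = (\<Sum>k\<in>UNIV. \<Sum>a\<in>UNIV. H k a * dG k l a)"
    by (subst sum.swap) (simp add: Hs dGs)
  have "(\<Sum>k\<in>UNIV. Gam k k l) = (1/2) * ((\<Sum>k\<in>UNIV. \<Sum>a\<in>UNIV. H k a * dG k l a)
     + (\<Sum>k\<in>UNIV. \<Sum>a\<in>UNIV. H k a * dG l k a) - (\<Sum>k\<in>UNIV. \<Sum>a\<in>UNIV. H k a * dG a k l))"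
    by (simp add: Gam_def sum_distrib_left[symmetric] distrib_left right_diff_distrib sum.distrib sum_subtractf sum_divide_distrib)
  then show ?thesis using X by simp
qed

lemma S3: "(\<Sum>i\<in>UNIV. \<Sum>j\<in>UNIV. H i j * (\<Sum>k\<in>UNIV. \<Sum>l\<in>UNIV. Gam k k l * T l i j))
   = (real CARD('n) - 2) * PP / 2"
proof -
  have "(\<Sum>i\<in>UNIV. \<Sum>j\<in>UNIV. H i j * (\<Sum>k\<in>UNIV. \<Sum>l\<in>UNIV. Gam k k l * T l i j))
     = (\<Sum>i\<in>UNIV. \<Sum>j\<in>UNIV. \<Sum>k\<in>UNIV. \<Sum>l\<in>UNIV. Gam k k l * (H i j * T l i j))"
    by (simp add: sum_distrib_left mult.left_commute)
  also have "\<dots> = (\<Sum>k\<in>UNIV. \<Sum>l\<in>UNIV. \<Sum>i\<in>UNIV. \<Sum>j\<in>UNIV. Gam k k l * (H i j * T l i j))"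
    by (rule sw4)
  also have "\<dots> = (\<Sum>k\<in>UNIV. \<Sum>l\<in>UNIV. Gam k k l * ((real CARD('n) - 2) * W l))"
    by (simp add: sum_distrib_left[symmetric] HT)
  also have "\<dots> = (real CARD('n) - 2) * (\<Sum>l\<in>UNIV. (\<Sum>k\<in>UNIV. Gam k k l) * W l)"
    by (subst sum.swap) (simp add: sum_distrib_left sum_distrib_right mult_ac)
  also have "\<dots> = (real CARD('n) - 2) * (1/2) * (\<Sum>l\<in>UNIV. \<Sum>k\<in>UNIV. \<Sum>a\<in>UNIV. H k a * dG l k a * W l)"
    by (simp add: Gam_trace sum_distrib_left sum_distrib_right mult_ac)
  also have "(\<Sum>l\<in>UNIV. \<Sum>k\<in>UNIV. \<Sum>a\<in>UNIV. H k a * dG l k a * W l) = PP"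
    unfolding PP_def by (rule sw3[symmetric])
  finally show ?thesis by simp
qed

lemma T_tr2: "(\<Sum>k\<in>UNIV. T k k l) = - real CARD('n) * w l"
  using T_trace[of l] by (simp add: T_sym[of _ _ l])

lemma S4: "(\<Sum>i\<in>UNIV. \<Sum>j\<in>UNIV. H i j * (\<Sum>k\<in>UNIV. \<Sum>l\<in>UNIV. T k k l * Gam l i j))
   = - real CARD('n) * MM"
proof -
  have "(\<Sum>i\<in>UNIV. \<Sum>j\<in>UNIV. H i j * (\<Sum>k\<in>UNIV. \<Sum>l\<in>UNIV. T k k l * Gam l i j))
     = (\<Sum>i\<in>UNIV. \<Sum>j\<in>UNIV. \<Sum>l\<in>UNIV. \<Sum>k\<in>UNIV. T k k l * (H i j * Gam l i j))"
    by (subst swap_in2) (simp add: sum_distrib_left mult.left_commute)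
  also have "\<dots> = (\<Sum>i\<in>UNIV. \<Sum>j\<in>UNIV. \<Sum>l\<in>UNIV. (- real CARD('n) * w l) * (H i j * Gam l i j))"
    by (simp add: sum_distrib_right[symmetric] T_tr2)
  also have "\<dots> = (\<Sum>l\<in>UNIV. \<Sum>i\<in>UNIV. \<Sum>j\<in>UNIV. (- real CARD('n) * w l) * (H i j * Gam l i j))"
    by (rule sw3)
  also have "\<dots> = - real CARD('n) * MM"
    by (simp add: MM_def sum_distrib_left mult_ac sum_negf)
  finally show ?thesis .
qed

lemma S5: "(\<Sum>i\<in>UNIV. \<Sum>j\<in>UNIV. H i j * (\<Sum>k\<in>UNIV. \<Sum>l\<in>UNIV. T k k l * T l i j))
   = - real CARD('n) * (real CARD('n) - 2) * ww"
proof -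
  have "(\<Sum>i\<in>UNIV. \<Sum>j\<in>UNIV. H i j * (\<Sum>k\<in>UNIV. \<Sum>l\<in>UNIV. T k k l * T l i j))
     = (\<Sum>i\<in>UNIV. \<Sum>j\<in>UNIV. \<Sum>k\<in>UNIV. \<Sum>l\<in>UNIV. T k k l * (H i j * T l i j))"
    by (simp add: sum_distrib_left mult.left_commute)
  also have "\<dots> = (\<Sum>k\<in>UNIV. \<Sum>l\<in>UNIV. \<Sum>i\<in>UNIV. \<Sum>j\<in>UNIV. T k k l * (H i j * T l i j))"
    by (rule sw4)
  also have "\<dots> = (\<Sum>k\<in>UNIV. \<Sum>l\<in>UNIV. T k k l * ((real CARD('n) - 2) * W l))"
    by (simp add: sum_distrib_left[symmetric] HT)
  also have "\<dots> = (\<Sum>l\<in>UNIV. (\<Sum>k\<in>UNIV. T k k l) * ((real CARD('n) - 2) * W l))"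
    by (subst sum.swap) (simp add: sum_distrib_right)
  also have "\<dots> = - real CARD('n) * (real CARD('n) - 2) * ww"
    by (simp add: T_tr2 ww_def sum_distrib_left mult_ac sum_negf)
  finally show ?thesis .
qed

end


lemma rot4: "(\<Sum>i\<in>A. \<Sum>j\<in>B. \<Sum>k\<in>C. \<Sum>l\<in>D. f i j k l) = (\<Sum>j\<in>B. \<Sum>k\<in>C. \<Sum>l\<in>D. \<Sum>i\<in>A. f i j k l)"
proof -
  have "(\<Sum>i\<in>A. \<Sum>j\<in>B. \<Sum>k\<in>C. \<Sum>l\<in>D. f i j k l) = (\<Sum>j\<in>B. \<Sum>i\<in>A. \<Sum>k\<in>C. \<Sum>l\<in>D. f i j k l)"
    by (rule sum.swap)
  also have "\<dots> = (\<Sum>j\<in>B. \<Sum>k\<in>C. \<Sum>i\<in>A. \<Sum>l\<in>D. f i j k l)" by (rule swap_in1)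
  also have "\<dots> = (\<Sum>j\<in>B. \<Sum>k\<in>C. \<Sum>l\<in>D. \<Sum>i\<in>A. f i j k l)" by (rule swap_in2)
  finally show ?thesis .
qed

context alg begin

lemma HG2: "(\<Sum>i\<in>UNIV. H i j * G i k) = (if j = k then 1 else 0)"
  using HG[of j k] by (simp add: Hs[of _ j])

lemma HW2: "(\<Sum>i\<in>UNIV. H i j * w i) = W j"
  unfolding W_def by (simp add: Hs[of _ j])

lemma X6: "(\<Sum>i\<in>UNIV. \<Sum>j\<in>UNIV. H i j * (\<Sum>k\<in>UNIV. \<Sum>l\<in>UNIV. Gam k j l * T l i k)) = - MM"
proof -
  have inner: "(\<Sum>k\<in>UNIV. \<Sum>l\<in>UNIV. Gam k j l * T l i k) =
      (\<Sum>k\<in>UNIV. \<Sum>l\<in>UNIV. Gam k j l * (G i k * W l)) - (\<Sum>k\<in>UNIV. Gam k j k) * w i - (\<Sum>k\<in>UNIV. Gam k j i * w k)" for i j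
  proof -
    have "Gam k j l * T l i k = Gam k j l * (G i k * W l) - (if l = k then Gam k j k * w i else 0)
       - (if l = i then Gam k j i * w k else 0)" for k l
      by (simp add: T_alt algebra_simps)
    then have "(\<Sum>k\<in>UNIV. \<Sum>l\<in>UNIV. Gam k j l * T l i k) =
      (\<Sum>k\<in>UNIV. (\<Sum>l\<in>UNIV. Gam k j l * (G i k * W l)) - Gam k j k * w i - Gam k j i * w k)"
      by (simp add: sum_subtractf)
    then show ?thesis by (simp add: sum_subtractf sum_distrib_right)
  qed
  define A where "A = (\<Sum>i\<in>UNIV. \<Sum>j\<in>UNIV. H i j * (\<Sum>k\<in>UNIV. \<Sum>l\<in>UNIV. Gam k j l * (G i k * W l)))"
  define B where "B = (\<Sum>i\<in>UNIV. \<Sum>j\<in>UNIV. H i j * ((\<Sum>k\<in>UNIV. Gam k j k) * w i))"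
  define C where "C = (\<Sum>i\<in>UNIV. \<Sum>j\<in>UNIV. H i j * (\<Sum>k\<in>UNIV. Gam k j i * w k))"
  have split: "(\<Sum>i\<in>UNIV. \<Sum>j\<in>UNIV. H i j * (\<Sum>k\<in>UNIV. \<Sum>l\<in>UNIV. Gam k j l * T l i k)) = A - B - C"
    unfolding A_def B_def C_def inner by (simp add: right_diff_distrib sum_subtractf)
  have A: "A = (\<Sum>j\<in>UNIV. \<Sum>l\<in>UNIV. Gam j j l * W l)"
  proof -
    have "A = (\<Sum>i\<in>UNIV. \<Sum>j\<in>UNIV. \<Sum>k\<in>UNIV. \<Sum>l\<in>UNIV. (H i j * G i k) * (Gam k j l * W l))"
      unfolding A_def by (simp add: sum_distrib_left mult_ac)
    also have "\<dots> = (\<Sum>j\<in>UNIV. \<Sum>k\<in>UNIV. \<Sum>l\<in>UNIV. \<Sum>i\<in>UNIV. (H i j * G i k) * (Gam k j l * W l))"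
      by (rule rot4)
    also have "\<dots> = (\<Sum>j\<in>UNIV. \<Sum>k\<in>UNIV. \<Sum>l\<in>UNIV. (if j = k then 1 else 0) * (Gam k j l * W l))"
      by (simp add: sum_distrib_right[symmetric] HG2)
    also have "\<dots> = (\<Sum>j\<in>UNIV. \<Sum>l\<in>UNIV. Gam j j l * W l)"
      by (subst swap_in1) simp
    finally show ?thesis .
  qed
  have B: "B = (\<Sum>j\<in>UNIV. \<Sum>k\<in>UNIV. Gam k j k * W j)"
  proof -
    have "B = (\<Sum>j\<in>UNIV. \<Sum>i\<in>UNIV. H i j * w i * (\<Sum>k\<in>UNIV. Gam k j k))"
      unfolding B_def by (subst sum.swap) (simp add: mult_ac)
    also have "\<dots> = (\<Sum>j\<in>UNIV. W j * (\<Sum>k\<in>UNIV. Gam k j k))"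
      by (simp add: HW2[symmetric] sum_distrib_right)
    finally show ?thesis by (simp add: sum_distrib_left mult_ac)
  qed
  have AB: "A = B"
  proof -
    have "A = (\<Sum>l\<in>UNIV. \<Sum>j\<in>UNIV. Gam j l j * W l)"
      unfolding A by (subst sum.swap) (simp add: Gam_sym)
    then show ?thesis unfolding B by simp
  qed
  have Cm: "C = MM"
  proof -
    have "C = (\<Sum>i\<in>UNIV. \<Sum>j\<in>UNIV. \<Sum>k\<in>UNIV. H i j * Gam k i j * w k)"
      unfolding C_def by (simp add: sum_distrib_left mult_ac Gam_sym)
    also have "\<dots> = MM" unfolding MM_def by (rule sw3)
    finally show ?thesis .
  qed
  show ?thesis using split AB Cm by simp
qed

lemma X7: "(\<Sum>i\<in>UNIV. \<Sum>j\<in>UNIV. H i j * (\<Sum>k\<in>UNIV. \<Sum>l\<in>UNIV. T k j l * Gam l i k)) = - MM"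
proof -
  have "(\<Sum>i\<in>UNIV. \<Sum>j\<in>UNIV. H i j * (\<Sum>k\<in>UNIV. \<Sum>l\<in>UNIV. T k j l * Gam l i k))
      = (\<Sum>j\<in>UNIV. \<Sum>i\<in>UNIV. H i j * (\<Sum>k\<in>UNIV. \<Sum>l\<in>UNIV. T k j l * Gam l i k))"
    by (rule sum.swap)
  also have "\<dots> = (\<Sum>i\<in>UNIV. \<Sum>j\<in>UNIV. H i j * (\<Sum>k\<in>UNIV. \<Sum>l\<in>UNIV. Gam k j l * T l i k))"
  proof -
    have key: "H b a * (\<Sum>k\<in>UNIV. \<Sum>l\<in>UNIV. T k a l * Gam l b k) = H a b * (\<Sum>k\<in>UNIV. \<Sum>l\<in>UNIV. Gam k b l * T l a k)" for a b
    proof -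
      have "(\<Sum>k\<in>UNIV. \<Sum>l\<in>UNIV. T k a l * Gam l b k) = (\<Sum>k\<in>UNIV. \<Sum>l\<in>UNIV. Gam k b l * T l a k)"
        by (subst sum.swap) (simp add: mult.commute)
      then show ?thesis by (simp add: Hs[of b a])
    qed
    show ?thesis by (intro sum.cong refl) (rule key)
  qed
  finally show ?thesis using X6 by simp
qed

lemma TT: "(\<Sum>k\<in>UNIV. \<Sum>l\<in>UNIV. T k j l * T l i k) = (real CARD('n) + 2) * w i * w j - 2 * G i j * ww"
proof -
  define a :: "'n \<Rightarrow> 'n \<Rightarrow> real" where "a k l = G j l * W k" for k l
  define b :: "'n \<Rightarrow> 'n \<Rightarrow> real" where "b k l = (if k = l then w j else 0)" for k l
  define c :: "'n \<Rightarrow> 'n \<Rightarrow> real" where "c k l = (if k = j then w l else 0)" for k l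
  define d :: "'n \<Rightarrow> 'n \<Rightarrow> real" where "d k l = G i k * W l" for k l
  define e :: "'n \<Rightarrow> 'n \<Rightarrow> real" where "e k l = (if l = k then w i else 0)" for k l
  define f :: "'n \<Rightarrow> 'n \<Rightarrow> real" where "f k l = (if l = i then w k else 0)" for k l
  have TkT: "T k j l * T l i k = a k l * d k l - a k l * e k l - a k l * f k l - b k l * d k l + b k l * e k l + b k l * f k l
      - c k l * d k l + c k l * e k l + c k l * f k l" for k l
    unfolding a_def b_def c_def d_def e_def f_def T_alt by (simp add: algebra_simps)
  have s1: "(\<Sum>k\<in>UNIV. \<Sum>l\<in>UNIV. a k l * d k l) = w i * w j"
  proof -
    have "(\<Sum>k\<in>UNIV. \<Sum>l\<in>UNIV. a k l * d k l) = (\<Sum>k\<in>UNIV. G i k * W k) * (\<Sum>l\<in>UNIV. G j l * W l)"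
      unfolding a_def d_def by (simp add: sum_distrib_left sum_distrib_right mult_ac) (subst sum.swap, simp add: mult_ac)
    then show ?thesis by (simp add: GW)
  qed
  have s2: "(\<Sum>k\<in>UNIV. \<Sum>l\<in>UNIV. a k l * e k l) = w i * w j"
    unfolding a_def e_def by (simp add: GW sum_distrib_right[symmetric] mult.assoc[symmetric])
  have s3: "(\<Sum>k\<in>UNIV. \<Sum>l\<in>UNIV. a k l * f k l) = G i j * ww"
    unfolding a_def f_def ww_def by (simp add: sum_distrib_left Gs mult_ac)
  have s4: "(\<Sum>k\<in>UNIV. \<Sum>l\<in>UNIV. b k l * d k l) = w i * w j"
    unfolding b_def d_def by (simp add: GW sum_distrib_left[symmetric] mult_ac)
  have s5: "(\<Sum>k\<in>UNIV. \<Sum>l\<in>UNIV. b k l * e k l) = real CARD('n) * w i * w j"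
    unfolding b_def e_def by simp
  have s6: "(\<Sum>k\<in>UNIV. \<Sum>l\<in>UNIV. b k l * f k l) = w i * w j"
    unfolding b_def f_def by (simp add: mult.commute)
  have s7: "(\<Sum>k\<in>UNIV. \<Sum>l\<in>UNIV. c k l * d k l) = G i j * ww"
    unfolding c_def d_def ww_def by (simp add: sum_distrib_left mult_ac)
  have s8: "(\<Sum>k\<in>UNIV. \<Sum>l\<in>UNIV. c k l * e k l) = w i * w j"
    unfolding c_def e_def by (simp add: mult.commute)
  have s9: "(\<Sum>k\<in>UNIV. \<Sum>l\<in>UNIV. c k l * f k l) = w i * w j"
    unfolding c_def f_def by (simp add: mult.commute)
  have "(\<Sum>k\<in>UNIV. \<Sum>l\<in>UNIV. T k j l * T l i k) =
     (\<Sum>k\<in>UNIV. \<Sum>l\<in>UNIV. a k l * d k l) - (\<Sum>k\<in>UNIV. \<Sum>l\<in>UNIV. a k l * e k l)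
   - (\<Sum>k\<in>UNIV. \<Sum>l\<in>UNIV. a k l * f k l) - (\<Sum>k\<in>UNIV. \<Sum>l\<in>UNIV. b k l * d k l)
   + (\<Sum>k\<in>UNIV. \<Sum>l\<in>UNIV. b k l * e k l) + (\<Sum>k\<in>UNIV. \<Sum>l\<in>UNIV. b k l * f k l)
   - (\<Sum>k\<in>UNIV. \<Sum>l\<in>UNIV. c k l * d k l) + (\<Sum>k\<in>UNIV. \<Sum>l\<in>UNIV. c k l * e k l)
   + (\<Sum>k\<in>UNIV. \<Sum>l\<in>UNIV. c k l * f k l)"
    unfolding TkT by (simp only: sum.distrib sum_subtractf)
  also have "\<dots> = (real CARD('n) + 2) * w i * w j - 2 * G i j * ww"
    unfolding s1 s2 s3 s4 s5 s6 s7 s8 s9 by (simp add: algebra_simps)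
  finally show ?thesis .
qed

lemma X8: "(\<Sum>i\<in>UNIV. \<Sum>j\<in>UNIV. H i j * (\<Sum>k\<in>UNIV. \<Sum>l\<in>UNIV. T k j l * T l i k))
   = (2 - real CARD('n)) * ww"
proof -
  have hw: "(\<Sum>i\<in>UNIV. \<Sum>j\<in>UNIV. H i j * (w i * w j)) = ww"
    unfolding ww_def W_def by (simp add: sum_distrib_left mult_ac)
  have "(\<Sum>i\<in>UNIV. \<Sum>j\<in>UNIV. H i j * (\<Sum>k\<in>UNIV. \<Sum>l\<in>UNIV. T k j l * T l i k))
     = (\<Sum>i\<in>UNIV. \<Sum>j\<in>UNIV. (real CARD('n) + 2) * (H i j * (w i * w j)) - 2 * ww * (H i j * G i j))"
    unfolding TT by (intro sum.cong refl) (simp add: algebra_simps)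
  also have "\<dots> = (real CARD('n) + 2) * ww - 2 * ww * real CARD('n)"
    by (simp add: sum_subtractf sum_distrib_left[symmetric] hw trHG)
  finally show ?thesis by (simp add: algebra_simps)
qed

lemma MM_eq: "MM = QQ - PP / 2"
proof -
  have "MM = (1/2) * (\<Sum>i\<in>UNIV. \<Sum>j\<in>UNIV. \<Sum>a\<in>UNIV. H i j * (dG i j a + dG j i a - dG a i j) * W a)"
  proof -
    have "MM = (\<Sum>i\<in>UNIV. \<Sum>j\<in>UNIV. \<Sum>l\<in>UNIV. H i j * Gam l i j * w l)"
      unfolding MM_def by (rule sw3[symmetric])
    also have "\<dots> = (\<Sum>i\<in>UNIV. \<Sum>j\<in>UNIV. \<Sum>l\<in>UNIV. \<Sum>a\<in>UNIV. (1/2) * (H i j * (dG i j a + dG j i a - dG a i j)) * (H l a * w l))"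
      unfolding Gam_def by (simp add: sum_distrib_left sum_distrib_right mult_ac)
    also have "\<dots> = (\<Sum>i\<in>UNIV. \<Sum>j\<in>UNIV. \<Sum>a\<in>UNIV. (1/2) * (H i j * (dG i j a + dG j i a - dG a i j)) * W a)"
    proof -
      have inner: "(\<Sum>l\<in>UNIV. X * (H l a * w l)) = X * W a" for X a
        by (simp add: sum_distrib_left[symmetric] HW2)
      have **: "(\<Sum>l\<in>UNIV. \<Sum>a\<in>UNIV. (1/2) * (H i j * (dG i j a + dG j i a - dG a i j)) * (H l a * w l))
          = (\<Sum>a\<in>UNIV. (1/2) * (H i j * (dG i j a + dG j i a - dG a i j)) * W a)" for i j
        by (subst sum.swap) (rule sum.cong[OF refl], rule inner)
      show ?thesis by (rule sum.cong[OF refl], rule sum.cong[OF refl], rule **)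
    qed
    finally show ?thesis by (simp add: sum_distrib_left mult_ac)
  qed
  moreover have "(\<Sum>i\<in>UNIV. \<Sum>j\<in>UNIV. \<Sum>a\<in>UNIV. H i j * dG i j a * W a) = QQ"
    unfolding QQ_def ..
  moreover have "(\<Sum>i\<in>UNIV. \<Sum>j\<in>UNIV. \<Sum>a\<in>UNIV. H i j * dG j i a * W a) = QQ"
    unfolding QQ_def by (subst sum.swap) (simp add: Hs)
  moreover have "(\<Sum>i\<in>UNIV. \<Sum>j\<in>UNIV. \<Sum>a\<in>UNIV. H i j * dG a i j * W a) = PP"
    unfolding PP_def ..
  ultimately show ?thesis
    by (simp add: distrib_left right_diff_distrib distrib_right left_diff_distrib sum.distrib sum_subtractf mult_ac)
qed

lemma S2: "(\<Sum>i\<in>UNIV. \<Sum>j\<in>UNIV. H i j * (\<Sum>k\<in>UNIV. dT j k i k)) = - real CARD('n) * SHdw"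
proof -
  have "(\<Sum>i\<in>UNIV. \<Sum>j\<in>UNIV. H i j * (\<Sum>k\<in>UNIV. dT j k i k)) = - real CARD('n) * (\<Sum>i\<in>UNIV. \<Sum>j\<in>UNIV. H i j * dw j i)"
    by (simp add: dT_trace sum_distrib_left mult_ac sum_negf)
  also have "(\<Sum>i\<in>UNIV. \<Sum>j\<in>UNIV. H i j * dw j i) = SHdw"
    unfolding SHdw_def by (subst sum.swap) (simp add: Hs)
  finally show ?thesis .
qed

lemma Dric_contr: "(\<Sum>i\<in>UNIV. \<Sum>j\<in>UNIV. H i j * Dric i j)
   = 2 * (real CARD('n) - 1) * (SHdw - MM) - (real CARD('n) - 1) * (real CARD('n) - 2) * ww"
proof -
  define A1 where "A1 i j = (\<Sum>k\<in>UNIV. dT k k i j)" for i j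
  define A2 where "A2 i j = (\<Sum>k\<in>UNIV. dT j k i k)" for i j
  define A3 where "A3 i j = (\<Sum>k\<in>UNIV. \<Sum>l\<in>UNIV. Gam k k l * T l i j)" for i j
  define A4 where "A4 i j = (\<Sum>k\<in>UNIV. \<Sum>l\<in>UNIV. T k k l * Gam l i j)" for i j
  define A5 where "A5 i j = (\<Sum>k\<in>UNIV. \<Sum>l\<in>UNIV. T k k l * T l i j)" for i j
  define A6 where "A6 i j = (\<Sum>k\<in>UNIV. \<Sum>l\<in>UNIV. Gam k j l * T l i k)" for i j
  define A7 where "A7 i j = (\<Sum>k\<in>UNIV. \<Sum>l\<in>UNIV. T k j l * Gam l i k)" for i j
  define A8 where "A8 i j = (\<Sum>k\<in>UNIV. \<Sum>l\<in>UNIV. T k j l * T l i k)" for i j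
  have D: "H i j * Dric i j = H i j * A1 i j - H i j * A2 i j + H i j * A3 i j + H i j * A4 i j + H i j * A5 i j
      - H i j * A6 i j - H i j * A7 i j - H i j * A8 i j" for i j
  proof -
    have "Dric i j = A1 i j - A2 i j + A3 i j + A4 i j + A5 i j - A6 i j - A7 i j - A8 i j"
      unfolding Dric_def A1_def A2_def A3_def A4_def A5_def A6_def A7_def A8_def
      by (simp add: sum.distrib sum_subtractf)
    then show ?thesis by (simp only: right_diff_distrib distrib_left)
  qed
  have "(\<Sum>i\<in>UNIV. \<Sum>j\<in>UNIV. H i j * Dric i j) =
     (\<Sum>i\<in>UNIV. \<Sum>j\<in>UNIV. H i j * A1 i j) - (\<Sum>i\<in>UNIV. \<Sum>j\<in>UNIV. H i j * A2 i j)
   + (\<Sum>i\<in>UNIV. \<Sum>j\<in>UNIV. H i j * A3 i j) + (\<Sum>i\<in>UNIV. \<Sum>j\<in>UNIV. H i j * A4 i j)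
   + (\<Sum>i\<in>UNIV. \<Sum>j\<in>UNIV. H i j * A5 i j) - (\<Sum>i\<in>UNIV. \<Sum>j\<in>UNIV. H i j * A6 i j)
   - (\<Sum>i\<in>UNIV. \<Sum>j\<in>UNIV. H i j * A7 i j) - (\<Sum>i\<in>UNIV. \<Sum>j\<in>UNIV. H i j * A8 i j)"
    unfolding D by (simp only: sum.distrib sum_subtractf)
  also have "\<dots> = ((real CARD('n) - 2) * SHdw + PP - real CARD('n) * QQ) - (- real CARD('n) * SHdw)
     + (real CARD('n) - 2) * PP / 2 + (- real CARD('n) * MM) + (- real CARD('n) * (real CARD('n) - 2) * ww)
     - (- MM) - (- MM) - (2 - real CARD('n)) * ww"
    unfolding A1_def A2_def A3_def A4_def A5_def A6_def A7_def A8_def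
    by (simp only: S1 S2 S3 S4 S5 X6 X7 X8)
  also have "\<dots> = 2 * (real CARD('n) - 1) * (SHdw - MM) - (real CARD('n) - 1) * (real CARD('n) - 2) * ww"
    unfolding MM_eq by (simp add: algebra_simps add_divide_distrib diff_divide_distrib)
  finally show ?thesis .
qed

end


lemma pd_minus: assumes "lined i f x" shows "pd i (\<lambda>y. - f y) x = - pd i f x \<and> lined i (\<lambda>y. - f y) x"
  using pd_mult[OF pd_const[THEN conjunct2, of i "-1" x] assms] pd_const[of i "-1" x] by simp

lemma matrix_inv_unique:
  fixes A :: "real^'n^'n"
  assumes "invertible A" "A ** B = mat 1"
  shows "matrix_inv A = B"
proof -
  have "\<exists>A'. A ** A' = mat 1 \<and> A' ** A = mat 1" using assms(1) unfolding invertible_def by blast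
  then have "A ** matrix_inv A = mat 1 \<and> matrix_inv A ** A = mat 1"
    unfolding matrix_inv_def by (rule someI_ex)
  then have "matrix_inv A ** A = mat 1" by blast
  have "matrix_inv A = matrix_inv A ** (A ** B)" using assms(2) by simp
  also have "\<dots> = (matrix_inv A ** A) ** B" by (rule matrix_mul_assoc)
  also have "\<dots> = B" using \<open>matrix_inv A ** A = mat 1\<close> by simp
  finally show ?thesis .
qed

lemma pd_if0: "lined i f x \<Longrightarrow> pd i (\<lambda>y. if P then f y else 0) x = (if P then pd i f x else 0)
   \<and> lined i (\<lambda>y. if P then f y else 0) x"
  by (cases P) (simp_all add: pd_const)

lemma smooth_if0: "smooth_fun U f \<Longrightarrow> smooth_fun U (\<lambda>y. if P then f y else 0)"
  by (cases P) (simp_all add: smooth_const)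

locale conf =
  fixes U :: "(real^'n::finite) set" and g :: "'n metric" and u :: "real^'n \<Rightarrow> real"
  assumes U: "open U" and gm: "riem_metric U g" and us: "smooth_fun U u" and upos: "\<forall>y\<in>U. u y > 0"
begin

abbreviation "gh \<equiv> conf_metric u g"

lemma gh_entry: "gh y $ i $ j = g y $ i $ j * inverse (u y * u y)"
  by (simp add: conf_metric_def power2_eq_square divide_inverse mult.commute)

lemma ginv_gh: assumes y: "y \<in> U" shows "ginv gh y = (u y)\<^sup>2 *\<^sub>R ginv g y"
proof -
  have u0: "u y \<noteq> 0" using upos y by auto
  have inv: "invertible (gh y)"
    unfolding conf_metric_def using scalar_invertible[OF _ metric_invertible[OF gm y]] u0 by simp
  have "gh y ** ((u y)\<^sup>2 *\<^sub>R ginv g y) = mat 1"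
    unfolding conf_metric_def
    by (simp add: matrix_scalar_ac scalar_matrix_assoc[symmetric] ginv_props(2)[OF gm y] u0)
  then show ?thesis unfolding ginv_def by (rule matrix_inv_unique[OF inv])
qed

lemma ginv_gh_entry: "y \<in> U \<Longrightarrow> ginv gh y $ i $ j = (u y)\<^sup>2 * ginv g y $ i $ j"
  by (simp add: ginv_gh)

lemma gs: "smooth_fun U (\<lambda>y. g y $ i $ j)" using gm unfolding riem_metric_def by blast
lemma hs: "smooth_fun U (\<lambda>y. ginv g y $ i $ j)" by (rule ginv_smooth[OF U gm])
lemma u0: "y \<in> U \<Longrightarrow> u y \<noteq> 0" using upos by auto

lemma pd_gh: assumes y: "y \<in> U"
  shows "pd k (\<lambda>y. gh y $ i $ j) y = pd k (\<lambda>y. g y $ i $ j) y / (u y)\<^sup>2 - 2 * pd k u y * g y $ i $ j / (u y)^3"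
proof -
  have lu: "lined k u y" by (rule smooth_lined[OF us y])
  have lg: "lined k (\<lambda>y. g y $ i $ j) y" by (rule smooth_lined[OF gs y])
  have uu: "pd k (\<lambda>y. u y * u y) y = pd k u y * u y + u y * pd k u y \<and> lined k (\<lambda>y. u y * u y) y"
    by (rule pd_mult[OF lu lu])
  define F where "F = (\<lambda>y. inverse (u y * u y))"
  have ui: "pd k F y = - ((pd k u y * u y + u y * pd k u y) * inverse ((u y * u y)\<^sup>2))
     \<and> lined k F y"
    unfolding F_def using pd_inverse[of k "\<lambda>y. u y * u y" y] uu u0[OF y] by simp
  have "pd k (\<lambda>y. gh y $ i $ j) y = pd k (\<lambda>y. g y $ i $ j * F y) y"
    by (simp add: gh_entry F_def)
  also have "\<dots> = pd k (\<lambda>y. g y $ i $ j) y * F y + g y $ i $ j * pd k F y"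
    using pd_mult[OF lg ui[THEN conjunct2]] by simp
  also have "\<dots> = pd k (\<lambda>y. g y $ i $ j) y / (u y)\<^sup>2 - 2 * pd k u y * g y $ i $ j / (u y)^3"
    unfolding ui[THEN conjunct1] using u0[OF y] by (simp add: F_def field_simps power2_eq_square power3_eq_cube)
  finally show ?thesis .
qed

definition "uw i y = pd i u y / u y"
definition "UW k y = (\<Sum>l\<in>UNIV. ginv g y $ k $ l * uw l y)"
definition "Tf k i j y = - ((if k = j then uw i y else 0) + (if k = i then uw j y else 0) - g y $ i $ j * UW k y)"

lemma chr_gh: assumes y: "y \<in> U" shows "chr gh k i j y = chr g k i j y + Tf k i j y"
proof -
  have uy: "u y \<noteq> 0" by (rule u0[OF y])
  have per: "ginv gh y $ k $ l * (pd i (\<lambda>y. gh y $ j $ l) y + pd j (\<lambda>y. gh y $ i $ l) y - pd l (\<lambda>y. gh y $ i $ j) y)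
    = ginv g y $ k $ l * (pd i (\<lambda>y. g y $ j $ l) y + pd j (\<lambda>y. g y $ i $ l) y - pd l (\<lambda>y. g y $ i $ j) y)
      - 2 * (ginv g y $ k $ l * g y $ l $ j) * uw i y - 2 * (ginv g y $ k $ l * g y $ l $ i) * uw j y
      + 2 * g y $ i $ j * (ginv g y $ k $ l * uw l y)" for l
    unfolding ginv_gh_entry[OF y] pd_gh[OF y] uw_def using uy
    by (simp add: g_sym[OF gm y, of j l] g_sym[OF gm y, of i l] field_simps power2_eq_square power3_eq_cube)
  have "chr gh k i j y = (1/2) * (\<Sum>l\<in>UNIV. ginv g y $ k $ l * (pd i (\<lambda>y. g y $ j $ l) y + pd j (\<lambda>y. g y $ i $ l) y - pd l (\<lambda>y. g y $ i $ j) y))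
      - (\<Sum>l\<in>UNIV. ginv g y $ k $ l * g y $ l $ j) * uw i y - (\<Sum>l\<in>UNIV. ginv g y $ k $ l * g y $ l $ i) * uw j y
      + g y $ i $ j * (\<Sum>l\<in>UNIV. ginv g y $ k $ l * uw l y)"
    unfolding chr_def per by (simp add: sum.distrib sum_subtractf sum_distrib_left sum_distrib_right algebra_simps)
  also have "\<dots> = chr g k i j y + Tf k i j y"
    unfolding ginv_left[OF gm y] by (simp add: chr_def Tf_def UW_def)
  finally show ?thesis .
qed

lemma uw_s: "smooth_fun U (uw i)"
  unfolding uw_def[abs_def] by (rule smooth_divide[OF U _ smooth_pd[OF us] us]) (use u0 in blast)

lemma UW_s: "smooth_fun U (UW k)"
  unfolding UW_def[abs_def]
  by (rule smooth_sum[OF U]) (auto intro: smooth_mult[OF U hs uw_s])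

lemma Tf_s: "smooth_fun U (Tf k i j)"
proof -
  have "smooth_fun U (\<lambda>y. (if k = j then uw i y else 0) + (if k = i then uw j y else 0) - g y $ i $ j * UW k y)"
    by (rule smooth_diff[OF U smooth_add[OF U smooth_if0[OF uw_s] smooth_if0[OF uw_s]] smooth_mult[OF U gs UW_s]])
  then show ?thesis unfolding Tf_def[abs_def] by (rule smooth_minus[OF U])
qed

lemma chr_s: "smooth_fun U (chr g k i j)"
proof -
  have "smooth_fun U (\<lambda>y. \<Sum>l\<in>UNIV. ginv g y $ k $ l *
      (pd i (\<lambda>y. g y $ j $ l) y + pd j (\<lambda>y. g y $ i $ l) y - pd l (\<lambda>y. g y $ i $ j) y))"
    by (rule smooth_sum[OF U])
       (auto intro!: smooth_mult[OF U hs] smooth_diff[OF U] smooth_add[OF U] smooth_pd[OF gs])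
  then show ?thesis unfolding chr_def[abs_def] by (rule smooth_mult[OF U smooth_const])
qed

lemma pd_UW: assumes x: "x \<in> U"
  shows "pd k' (UW k) x = (\<Sum>l\<in>UNIV. pd k' (\<lambda>y. ginv g y $ k $ l) x * uw l x + ginv g x $ k $ l * pd k' (uw l) x)"
  unfolding UW_def[abs_def]
  by (rule pd_sum_mult(1)) (auto intro: smooth_lined[OF hs x] smooth_lined[OF uw_s x])

lemma pd_Tf: assumes x: "x \<in> U"
  shows "pd k' (Tf k i j) x = - ((if k = j then pd k' (uw i) x else 0) + (if k = i then pd k' (uw j) x else 0)
      - (pd k' (\<lambda>y. g y $ i $ j) x * UW k x + g x $ i $ j * pd k' (UW k) x))"
proof -
  have a: "pd k' (\<lambda>y. if k = j then uw i y else 0) x = (if k = j then pd k' (uw i) x else 0)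
     \<and> lined k' (\<lambda>y. if k = j then uw i y else 0) x" by (rule pd_if0[OF smooth_lined[OF uw_s x]])
  have b: "pd k' (\<lambda>y. if k = i then uw j y else 0) x = (if k = i then pd k' (uw j) x else 0)
     \<and> lined k' (\<lambda>y. if k = i then uw j y else 0) x" by (rule pd_if0[OF smooth_lined[OF uw_s x]])
  have c: "pd k' (\<lambda>y. g y $ i $ j * UW k y) x = pd k' (\<lambda>y. g y $ i $ j) x * UW k x + g x $ i $ j * pd k' (UW k) x
     \<and> lined k' (\<lambda>y. g y $ i $ j * UW k y) x"
    by (rule pd_mult[OF smooth_lined[OF gs x] smooth_lined[OF UW_s x]])
  have ab: "pd k' (\<lambda>y. (if k = j then uw i y else 0) + (if k = i then uw j y else 0)) x
     = (if k = j then pd k' (uw i) x else 0) + (if k = i then pd k' (uw j) x else 0)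
     \<and> lined k' (\<lambda>y. (if k = j then uw i y else 0) + (if k = i then uw j y else 0)) x"
    using pd_add[OF a[THEN conjunct2] b[THEN conjunct2]] a b by simp
  have abc: "pd k' (\<lambda>y. (if k = j then uw i y else 0) + (if k = i then uw j y else 0) - g y $ i $ j * UW k y) x
     = (if k = j then pd k' (uw i) x else 0) + (if k = i then pd k' (uw j) x else 0)
      - (pd k' (\<lambda>y. g y $ i $ j) x * UW k x + g x $ i $ j * pd k' (UW k) x)
     \<and> lined k' (\<lambda>y. (if k = j then uw i y else 0) + (if k = i then uw j y else 0) - g y $ i $ j * UW k y) x"
    using pd_diff[OF ab[THEN conjunct2] c[THEN conjunct2]] ab c by simp
  show ?thesis unfolding Tf_def[abs_def] using pd_minus[OF abc[THEN conjunct2]] abc by simp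
qed

lemma pd_chr_gh: assumes x: "x \<in> U"
  shows "pd k' (chr gh k i j) x = pd k' (chr g k i j) x + pd k' (Tf k i j) x"
proof -
  have "pd k' (chr gh k i j) x = pd k' (\<lambda>y. chr g k i j y + Tf k i j y) x"
    by (rule pd_local(1)[OF U x]) (simp add: chr_gh)
  also have "\<dots> = pd k' (chr g k i j) x + pd k' (Tf k i j) x"
    using pd_add[OF smooth_lined[OF chr_s x] smooth_lined[OF Tf_s x]] by simp
  finally show ?thesis .
qed

lemma dG_sym: assumes x: "x \<in> U" shows "pd k (\<lambda>y. g y $ i $ j) x = pd k (\<lambda>y. g y $ j $ i) x"
  by (rule pd_local(1)[OF U x]) (simp add: g_sym[OF gm])

lemma alg_at: assumes x: "x \<in> U"
  shows "alg (\<lambda>i j. g x $ i $ j) (\<lambda>i j. ginv g x $ i $ j) (\<lambda>k i j. pd k (\<lambda>y. g y $ i $ j) x)"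
proof
  show "(\<Sum>l\<in>UNIV. ginv g x $ i $ l * g x $ l $ j) = (if i = j then 1 else 0)" for i j by (rule ginv_left[OF gm x])
  show "(\<Sum>l\<in>UNIV. g x $ i $ l * ginv g x $ l $ j) = (if i = j then 1 else 0)" for i j by (rule ginv_right[OF gm x])
  show "g x $ i $ j = g x $ j $ i" for i j by (rule g_sym[OF gm x])
  show "ginv g x $ i $ j = ginv g x $ j $ i" for i j by (rule ginv_sym[OF gm x])
  show "pd k (\<lambda>y. g y $ i $ j) x = pd k (\<lambda>y. g y $ j $ i) x" for k i j by (rule dG_sym[OF x])
qed

lemma pd_uw: assumes x: "x \<in> U"
  shows "pd i (uw j) x = pd i (pd j u) x / u x - pd j u x * pd i u x / (u x)\<^sup>2"
proof -
  have l1: "lined i (pd j u) x" by (rule smooth_lined[OF smooth_pd[OF us] x])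
  have l2: "lined i u x" by (rule smooth_lined[OF us x])
  have inv: "pd i (\<lambda>y. inverse (u y)) x = - (pd i u x * inverse ((u x)\<^sup>2)) \<and> lined i (\<lambda>y. inverse (u y)) x"
    by (rule pd_inverse[OF l2 u0[OF x]])
  have "pd i (uw j) x = pd i (\<lambda>y. pd j u y * inverse (u y)) x"
    by (simp add: uw_def[abs_def] divide_inverse)
  also have "\<dots> = pd i (pd j u) x * inverse (u x) + pd j u x * pd i (\<lambda>y. inverse (u y)) x"
    using pd_mult[OF l1 inv[THEN conjunct2]] by simp
  also have "\<dots> = pd i (pd j u) x / u x - pd j u x * pd i u x / (u x)\<^sup>2"
    unfolding inv[THEN conjunct1] by (simp add: divide_inverse)
  finally show ?thesis .
qed

end


context conf begin

lemma ric_gh: assumes x: "x \<in> U"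
  shows "ric gh i j x = ric g i j x +
    alg.Dric (\<lambda>i j. g x $ i $ j) (\<lambda>i j. ginv g x $ i $ j) (\<lambda>k i j. pd k (\<lambda>y. g y $ i $ j) x)
     (\<lambda>i. uw i x) (\<lambda>k i. pd k (uw i) x) i j"
proof -
  interpret A: alg "\<lambda>i j. g x $ i $ j" "\<lambda>i j. ginv g x $ i $ j" "\<lambda>k i j. pd k (\<lambda>y. g y $ i $ j) x"
    "\<lambda>i. uw i x" "\<lambda>k i. pd k (uw i) x"
    by (rule alg_at[OF x])
  have Gam: "A.Gam k i j = chr g k i j x" for k i j by (simp add: A.Gam_def chr_def)
  have W: "A.W k = UW k x" for k by (simp add: A.W_def UW_def)
  have T: "A.T k i j = Tf k i j x" for k i j by (simp add: A.T_def Tf_def W)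
  have dT: "A.dT k' k i j = pd k' (Tf k i j) x" for k' k i j
    by (simp add: A.dT_def A.dW_def A.dH_def pd_Tf[OF x] pd_UW[OF x] pd_ginv[OF U gm x] W)
  have chrx: "chr gh k i j x = A.Gam k i j + A.T k i j" for k i j using chr_gh[OF x] T Gam by simp
  have pdc: "pd k' (chr gh k i j) x = pd k' (chr g k i j) x + A.dT k' k i j" for k' k i j
    using pd_chr_gh[OF x] dT by simp
  have per: "(A.Gam k k l + A.T k k l) * (A.Gam l i j + A.T l i j) - (A.Gam k j l + A.T k j l) * (A.Gam l i k + A.T l i k)
     = (A.Gam k k l * A.Gam l i j - A.Gam k j l * A.Gam l i k) +
       (A.Gam k k l * A.T l i j + A.T k k l * A.Gam l i j + A.T k k l * A.T l i j
      - A.Gam k j l * A.T l i k - A.T k j l * A.Gam l i k - A.T k j l * A.T l i k)" for k l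
    by (simp add: algebra_simps)
  have "ric gh i j x = (\<Sum>k\<in>UNIV. (pd k (chr g k i j) x - pd j (chr g k i k) x
      + (\<Sum>l\<in>UNIV. A.Gam k k l * A.Gam l i j - A.Gam k j l * A.Gam l i k))
      + (A.dT k k i j - A.dT j k i k + (\<Sum>l\<in>UNIV. A.Gam k k l * A.T l i j + A.T k k l * A.Gam l i j + A.T k k l * A.T l i j
      - A.Gam k j l * A.T l i k - A.T k j l * A.Gam l i k - A.T k j l * A.T l i k)))"
    unfolding ric_def chrx pdc
  proof (rule sum.cong[OF refl])
    fix k
    have "(\<Sum>l\<in>UNIV. (A.Gam k k l + A.T k k l) * (A.Gam l i j + A.T l i j) - (A.Gam k j l + A.T k j l) * (A.Gam l i k + A.T l i k))
      = (\<Sum>l\<in>UNIV. A.Gam k k l * A.Gam l i j - A.Gam k j l * A.Gam l i k) +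
        (\<Sum>l\<in>UNIV. A.Gam k k l * A.T l i j + A.T k k l * A.Gam l i j + A.T k k l * A.T l i j
      - A.Gam k j l * A.T l i k - A.T k j l * A.Gam l i k - A.T k j l * A.T l i k)"
      unfolding per by (rule sum.distrib)
    then show "pd k (chr g k i j) x + A.dT k k i j - (pd j (chr g k i k) x + A.dT j k i k) +
      (\<Sum>l\<in>UNIV. (A.Gam k k l + A.T k k l) * (A.Gam l i j + A.T l i j) - (A.Gam k j l + A.T k j l) * (A.Gam l i k + A.T l i k)) =
      pd k (chr g k i j) x - pd j (chr g k i k) x + (\<Sum>l\<in>UNIV. A.Gam k k l * A.Gam l i j - A.Gam k j l * A.Gam l i k) +
      (A.dT k k i j - A.dT j k i k + (\<Sum>l\<in>UNIV. A.Gam k k l * A.T l i j + A.T k k l * A.Gam l i j + A.T k k l * A.T l i j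
      - A.Gam k j l * A.T l i k - A.T k j l * A.Gam l i k - A.T k j l * A.T l i k))"
      by simp
  qed
  also have "\<dots> = ric g i j x + A.Dric i j"
    unfolding ric_def A.Dric_def sum.distrib Gam by simp
  finally show ?thesis .
qed

lemma scal_gh: assumes x: "x \<in> U"
  shows "scal gh x = (u x)\<^sup>2 * scal g x + 2 * (real CARD('n) - 1) * u x * lap g u x
     - real CARD('n) * (real CARD('n) - 1) * coinner g x (grad u x) (grad u x)"
proof -
  interpret A: alg "\<lambda>i j. g x $ i $ j" "\<lambda>i j. ginv g x $ i $ j" "\<lambda>k i j. pd k (\<lambda>y. g y $ i $ j) x"
    "\<lambda>i. uw i x" "\<lambda>k i. pd k (uw i) x"
    by (rule alg_at[OF x])
  have Gam: "A.Gam k i j = chr g k i j x" for k i j by (simp add: A.Gam_def chr_def)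
  have ux: "u x \<noteq> 0" by (rule u0[OF x])
  define Acu where "Acu = coinner g x (grad u x) (grad u x)"
  define P where "P = (\<Sum>i\<in>UNIV. \<Sum>j\<in>UNIV. ginv g x $ i $ j * pd i (pd j u) x)"
  define Q where "Q = (\<Sum>i\<in>UNIV. \<Sum>j\<in>UNIV. ginv g x $ i $ j * (\<Sum>k\<in>UNIV. chr g k i j x * pd k u x))"
  have Acu: "Acu = (\<Sum>i\<in>UNIV. \<Sum>j\<in>UNIV. ginv g x $ i $ j * pd i u x * pd j u x)"
    unfolding Acu_def coinner_def grad_def by simp
  have lap: "lap g u x = P - Q"
    unfolding lap_def P_def Q_def by (simp add: right_diff_distrib sum_subtractf)
  have SH: "A.SHdw = P / u x - Acu / (u x)\<^sup>2"
  proof -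
    have "A.SHdw = (\<Sum>i\<in>UNIV. \<Sum>j\<in>UNIV. ginv g x $ i $ j * pd i (pd j u) x / u x
        - ginv g x $ i $ j * pd i u x * pd j u x / (u x)\<^sup>2)"
      unfolding A.SHdw_def by (simp add: pd_uw[OF x] algebra_simps)
    then show ?thesis unfolding P_def Acu by (simp add: sum_subtractf sum_divide_distrib)
  qed
  have MM: "A.MM = Q / u x"
  proof -
    have "A.MM = (\<Sum>i\<in>UNIV. \<Sum>j\<in>UNIV. \<Sum>l\<in>UNIV. ginv g x $ i $ j * chr g l i j x * uw l x)"
      unfolding A.MM_def Gam by (rule sw3[symmetric])
    then show ?thesis unfolding Q_def by (simp add: uw_def sum_divide_distrib sum_distrib_left mult_ac)
  qed
  have ww: "A.ww = Acu / (u x)\<^sup>2"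
    unfolding A.ww_def A.W_def Acu
    by (simp add: uw_def sum_distrib_left sum_divide_distrib power2_eq_square mult_ac)
  have "scal gh x = (\<Sum>i\<in>UNIV. \<Sum>j\<in>UNIV. (u x)\<^sup>2 * (ginv g x $ i $ j * ric g i j x)
      + (u x)\<^sup>2 * (ginv g x $ i $ j * A.Dric i j))"
    unfolding scal_def ginv_gh_entry[OF x] ric_gh[OF x] by (simp add: algebra_simps)
  also have "\<dots> = (u x)\<^sup>2 * scal g x + (u x)\<^sup>2 * (\<Sum>i\<in>UNIV. \<Sum>j\<in>UNIV. ginv g x $ i $ j * A.Dric i j)"
    unfolding scal_def by (simp add: sum.distrib sum_distrib_left)
  also have "\<dots> = (u x)\<^sup>2 * scal g x + (u x)\<^sup>2 * (2 * (real CARD('n) - 1) * (P / u x - Acu / (u x)\<^sup>2 - Q / u x)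
       - (real CARD('n) - 1) * (real CARD('n) - 2) * (Acu / (u x)\<^sup>2))"
    unfolding A.Dric_contr SH MM ww ..
  also have "\<dots> = (u x)\<^sup>2 * scal g x + 2 * (real CARD('n) - 1) * u x * (P - Q)
     - real CARD('n) * (real CARD('n) - 1) * Acu"
    using ux by (simp add: field_simps power2_eq_square)
  finally show ?thesis unfolding lap Acu_def .
qed

lemma coinner_gh: "x \<in> U \<Longrightarrow> coinner gh x a b = (u x)\<^sup>2 * coinner g x a b"
  unfolding coinner_def by (simp add: ginv_gh_entry sum_distrib_left mult_ac)

lemma lap_gh: assumes x: "x \<in> U"
  shows "lap gh f x = (u x)\<^sup>2 * lap g f x - (real CARD('n) - 2) * u x * coinner g x (grad u x) (grad f x)"
proof -
  interpret A: alg "\<lambda>i j. g x $ i $ j" "\<lambda>i j. ginv g x $ i $ j" "\<lambda>k i j. pd k (\<lambda>y. g y $ i $ j) x"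
    "\<lambda>i. uw i x" "\<lambda>k i. pd k (uw i) x"
    by (rule alg_at[OF x])
  have Gam: "A.Gam k i j = chr g k i j x" for k i j by (simp add: A.Gam_def chr_def)
  have W: "A.W k = UW k x" for k by (simp add: A.W_def UW_def)
  have T: "A.T k i j = Tf k i j x" for k i j by (simp add: A.T_def Tf_def W)
  have chrx: "chr gh k i j x = chr g k i j x + A.T k i j" for k i j using chr_gh[OF x] T by simp
  have ux: "u x \<noteq> 0" by (rule u0[OF x])
  define E where "E = (\<Sum>i\<in>UNIV. \<Sum>j\<in>UNIV. ginv g x $ i $ j * (\<Sum>k\<in>UNIV. A.T k i j * pd k f x))"
  have E: "E = (real CARD('n) - 2) * (\<Sum>k\<in>UNIV. A.W k * pd k f x)"
  proof -
    have "E = (\<Sum>i\<in>UNIV. \<Sum>j\<in>UNIV. \<Sum>k\<in>UNIV. ginv g x $ i $ j * A.T k i j * pd k f x)"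
      unfolding E_def by (simp add: sum_distrib_left mult_ac)
    also have "\<dots> = (\<Sum>k\<in>UNIV. \<Sum>i\<in>UNIV. \<Sum>j\<in>UNIV. ginv g x $ i $ j * A.T k i j * pd k f x)"
      by (rule sw3)
    also have "\<dots> = (\<Sum>k\<in>UNIV. (real CARD('n) - 2) * A.W k * pd k f x)"
      by (simp add: sum_distrib_right[symmetric] A.HT)
    finally show ?thesis by (simp add: sum_distrib_left mult_ac)
  qed
  have cw: "(\<Sum>k\<in>UNIV. A.W k * pd k f x) = coinner g x (grad u x) (grad f x) / u x"
  proof -
    have "(\<Sum>k\<in>UNIV. A.W k * pd k f x) = (\<Sum>k\<in>UNIV. \<Sum>l\<in>UNIV. ginv g x $ k $ l * pd l u x * pd k f x) / u x"
      unfolding A.W_def by (simp add: uw_def sum_distrib_left sum_distrib_right sum_divide_distrib mult_ac)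
    also have "(\<Sum>k\<in>UNIV. \<Sum>l\<in>UNIV. ginv g x $ k $ l * pd l u x * pd k f x)
       = (\<Sum>k\<in>UNIV. \<Sum>l\<in>UNIV. ginv g x $ l $ k * pd l u x * pd k f x)"
      by (intro sum.cong refl) (simp add: ginv_sym[OF gm x])
    also have "\<dots> = coinner g x (grad u x) (grad f x)"
      unfolding coinner_def grad_def by (subst sum.swap) simp
    finally show ?thesis .
  qed
  have "lap gh f x = (\<Sum>i\<in>UNIV. \<Sum>j\<in>UNIV. (u x)\<^sup>2 * (ginv g x $ i $ j *
      (pd i (pd j f) x - (\<Sum>k\<in>UNIV. chr g k i j x * pd k f x)))
      - (u x)\<^sup>2 * (ginv g x $ i $ j * (\<Sum>k\<in>UNIV. A.T k i j * pd k f x)))"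
    unfolding lap_def ginv_gh_entry[OF x] chrx by (simp add: algebra_simps sum.distrib)
  also have "\<dots> = (u x)\<^sup>2 * lap g f x - (u x)\<^sup>2 * E"
    unfolding lap_def E_def by (simp add: sum_subtractf sum_distrib_left)
  also have "\<dots> = (u x)\<^sup>2 * lap g f x - (real CARD('n) - 2) * u x * coinner g x (grad u x) (grad f x)"
    unfolding E cw using ux by (simp add: field_simps power2_eq_square)
  finally show ?thesis .
qed

end


lemma coinner_scaleR_left: "coinner g x (c *\<^sub>R a) b = c * coinner g x a b"
  unfolding coinner_def by (simp add: sum_distrib_left mult_ac)
lemma coinner_scaleR_right: "coinner g x a (c *\<^sub>R b) = c * coinner g x a b"
  unfolding coinner_def by (simp add: sum_distrib_left mult_ac)
lemma coinner_diff_left: "coinner g x (a - b) c = coinner g x a c - coinner g x b c"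
  unfolding coinner_def by (simp add: algebra_simps sum_subtractf)
lemma coinner_diff_right: "coinner g x a (b - c) = coinner g x a b - coinner g x a c"
  unfolding coinner_def by (simp add: algebra_simps sum_subtractf)
lemma coinner_sym: "riem_metric U g \<Longrightarrow> x \<in> U \<Longrightarrow> coinner g x a b = coinner g x b a"
  unfolding coinner_def by (subst sum.swap) (simp add: ginv_sym mult_ac)

context conf begin

lemma pd_vu: assumes vs: "smooth_fun U v" and y: "y \<in> U"
  shows "pd j (\<lambda>y. v y / u y) y = pd j v y * inverse (u y) - v y * (pd j u y * inverse ((u y)\<^sup>2))"
proof -
  have inv: "pd j (\<lambda>y. inverse (u y)) y = - (pd j u y * inverse ((u y)\<^sup>2)) \<and> lined j (\<lambda>y. inverse (u y)) y"
    by (rule pd_inverse[OF smooth_lined[OF us y] u0[OF y]])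
  have "pd j (\<lambda>y. v y / u y) y = pd j (\<lambda>y. v y * inverse (u y)) y" by (simp add: divide_inverse)
  also have "\<dots> = pd j v y * inverse (u y) + v y * pd j (\<lambda>y. inverse (u y)) y"
    using pd_mult[OF smooth_lined[OF vs y] inv[THEN conjunct2]] by simp
  finally show ?thesis unfolding inv[THEN conjunct1] by simp
qed

lemma grad_vu: assumes vs: "smooth_fun U v" and x: "x \<in> U"
  shows "grad (\<lambda>y. v y / u y) x = (1 / u x) *\<^sub>R grad v x - (v x / (u x)\<^sup>2) *\<^sub>R grad u x"
proof -
  have h: "pd i (\<lambda>y. v y / u y) x = (1 / u x) * pd i v x - (v x / (u x)\<^sup>2) * pd i u x" for i
    by (subst pd_vu[OF vs x]) (simp add: divide_inverse mult_ac)
  show ?thesis unfolding grad_def vec_eq_iff by (simp only: h vector_scaleR_component vec_lambda_beta vector_minus_component) simp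
qed

lemma pdd_vu: assumes vs: "smooth_fun U v" and x: "x \<in> U"
  shows "pd i (pd j (\<lambda>y. v y / u y)) x = pd i (pd j v) x / u x - pd j v x * pd i u x / (u x)\<^sup>2
     - (pd i v x * pd j u x / (u x)\<^sup>2 + v x * pd i (pd j u) x / (u x)\<^sup>2 - 2 * v x * pd j u x * pd i u x / (u x)^3)"
proof -
  have ux: "u x \<noteq> 0" by (rule u0[OF x])
  have lu: "lined i u x" by (rule smooth_lined[OF us x])
  have lv: "lined i v x" by (rule smooth_lined[OF vs x])
  have lpu: "lined i (pd j u) x" by (rule smooth_lined[OF smooth_pd[OF us] x])
  have lpv: "lined i (pd j v) x" by (rule smooth_lined[OF smooth_pd[OF vs] x])
  have inv: "pd i (\<lambda>y. inverse (u y)) x = - (pd i u x * inverse ((u x)\<^sup>2)) \<and> lined i (\<lambda>y. inverse (u y)) x"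
    by (rule pd_inverse[OF lu ux])
  have uu: "pd i (\<lambda>y. u y * u y) x = pd i u x * u x + u x * pd i u x \<and> lined i (\<lambda>y. u y * u y) x"
    by (rule pd_mult[OF lu lu])
  define F where "F = (\<lambda>y. inverse (u y * u y))"
  have inv2: "pd i F x = - ((pd i u x * u x + u x * pd i u x) * inverse ((u x * u x)\<^sup>2)) \<and> lined i F x"
    unfolding F_def using pd_inverse[of i "\<lambda>y. u y * u y" x] uu ux by simp
  define Iv where "Iv = (\<lambda>y. inverse (u y))"
  have inv': "pd i Iv x = - (pd i u x * inverse ((u x)\<^sup>2)) \<and> lined i Iv x" unfolding Iv_def by (rule inv)
  have t1: "pd i (\<lambda>y. pd j v y * Iv y) x = pd i (pd j v) x * Iv x + pd j v x * pd i Iv x \<and> lined i (\<lambda>y. pd j v y * Iv y) x"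
    by (rule pd_mult[OF lpv inv'[THEN conjunct2]])
  have t2a: "pd i (\<lambda>y. pd j u y * F y) x = pd i (pd j u) x * F x + pd j u x * pd i F x \<and> lined i (\<lambda>y. pd j u y * F y) x"
    by (rule pd_mult[OF lpu inv2[THEN conjunct2]])
  have t2: "pd i (\<lambda>y. v y * (pd j u y * F y)) x = pd i v x * (pd j u x * F x) + v x * pd i (\<lambda>y. pd j u y * F y) x
     \<and> lined i (\<lambda>y. v y * (pd j u y * F y)) x"
    by (rule pd_mult[OF lv t2a[THEN conjunct2]])
  have t: "pd i (\<lambda>y. pd j v y * Iv y - v y * (pd j u y * F y)) x
     = pd i (\<lambda>y. pd j v y * Iv y) x - pd i (\<lambda>y. v y * (pd j u y * F y)) x"
    using pd_diff[OF t1[THEN conjunct2] t2[THEN conjunct2]] by simp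
  have "pd i (pd j (\<lambda>y. v y / u y)) x = pd i (\<lambda>y. pd j v y * Iv y - v y * (pd j u y * F y)) x"
    by (rule pd_local(1)[OF U x]) (simp add: pd_vu[OF vs] Iv_def F_def power2_eq_square)
  also have "\<dots> = pd i (pd j v) x * Iv x + pd j v x * pd i Iv x
      - (pd i v x * (pd j u x * F x) + v x * (pd i (pd j u) x * F x + pd j u x * pd i F x))"
    unfolding t t1[THEN conjunct1] t2[THEN conjunct1] t2a[THEN conjunct1] ..
  also have "\<dots> = pd i (pd j v) x / u x - pd j v x * pd i u x / (u x)\<^sup>2
     - (pd i v x * pd j u x / (u x)\<^sup>2 + v x * pd i (pd j u) x / (u x)\<^sup>2 - 2 * v x * pd j u x * pd i u x / (u x)^3)"
    unfolding inv'[THEN conjunct1] inv2[THEN conjunct1] using ux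
    by (simp add: Iv_def F_def field_simps power2_eq_square power3_eq_cube)
  finally show ?thesis .
qed

lemma lap_vu: assumes vs: "smooth_fun U v" and x: "x \<in> U"
  shows "lap g (\<lambda>y. v y / u y) x = lap g v x / u x - 2 * coinner g x (grad u x) (grad v x) / (u x)\<^sup>2
     - v x * lap g u x / (u x)\<^sup>2 + 2 * v x * coinner g x (grad u x) (grad u x) / (u x)^3"
proof -
  have ux: "u x \<noteq> 0" by (rule u0[OF x])
  define H where "H i j = ginv g x $ i $ j" for i j
  define Gv where "Gv i j = pd i (pd j v) x - (\<Sum>k\<in>UNIV. chr g k i j x * pd k v x)" for i j
  define Gu where "Gu i j = pd i (pd j u) x - (\<Sum>k\<in>UNIV. chr g k i j x * pd k u x)" for i j
  have per: "H i j * (pd i (pd j (\<lambda>y. v y / u y)) x - (\<Sum>k\<in>UNIV. chr g k i j x * pd k (\<lambda>y. v y / u y) x))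
     = (H i j * Gv i j) / u x - (H i j * pd i u x * pd j v x) / (u x)\<^sup>2 - (H i j * pd i v x * pd j u x) / (u x)\<^sup>2
       - v x * (H i j * Gu i j) / (u x)\<^sup>2 + 2 * v x * (H i j * pd i u x * pd j u x) / (u x)^3" for i j
  proof -
    have sk: "(\<Sum>k\<in>UNIV. chr g k i j x * pd k (\<lambda>y. v y / u y) x)
       = (\<Sum>k\<in>UNIV. chr g k i j x * pd k v x) / u x - v x * (\<Sum>k\<in>UNIV. chr g k i j x * pd k u x) / (u x)\<^sup>2"
      unfolding pd_vu[OF vs x]
      by (simp add: right_diff_distrib sum_subtractf sum_divide_distrib sum_distrib_left
          divide_inverse mult_ac)
    show ?thesis unfolding sk pdd_vu[OF vs x] Gv_def Gu_def using ux
      by (simp add: field_simps power2_eq_square power3_eq_cube)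
  qed
  have Lv: "(\<Sum>i\<in>UNIV. \<Sum>j\<in>UNIV. H i j * Gv i j) = lap g v x" unfolding lap_def H_def Gv_def ..
  have Lu: "(\<Sum>i\<in>UNIV. \<Sum>j\<in>UNIV. H i j * Gu i j) = lap g u x" unfolding lap_def H_def Gu_def ..
  have C1: "(\<Sum>i\<in>UNIV. \<Sum>j\<in>UNIV. H i j * pd i u x * pd j v x) = coinner g x (grad u x) (grad v x)"
    unfolding coinner_def H_def grad_def by simp
  have C2: "(\<Sum>i\<in>UNIV. \<Sum>j\<in>UNIV. H i j * pd i v x * pd j u x) = coinner g x (grad u x) (grad v x)"
  proof -
    have "(\<Sum>i\<in>UNIV. \<Sum>j\<in>UNIV. H i j * pd i v x * pd j u x) = coinner g x (grad v x) (grad u x)"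
      unfolding coinner_def H_def grad_def by simp
    also have "\<dots> = coinner g x (grad u x) (grad v x)" by (rule coinner_sym[OF gm x])
    finally show ?thesis .
  qed
  have A: "(\<Sum>i\<in>UNIV. \<Sum>j\<in>UNIV. H i j * pd i u x * pd j u x) = coinner g x (grad u x) (grad u x)"
    unfolding coinner_def H_def grad_def by simp
  have "lap g (\<lambda>y. v y / u y) x = (\<Sum>i\<in>UNIV. \<Sum>j\<in>UNIV. (H i j * Gv i j) / u x - (H i j * pd i u x * pd j v x) / (u x)\<^sup>2 - (H i j * pd i v x * pd j u x) / (u x)\<^sup>2
       - v x * (H i j * Gu i j) / (u x)\<^sup>2 + 2 * v x * (H i j * pd i u x * pd j u x) / (u x)^3)"
    unfolding lap_def H_def[symmetric] per ..
  also have "\<dots> = (\<Sum>i\<in>UNIV. \<Sum>j\<in>UNIV. H i j * Gv i j) / u x - (\<Sum>i\<in>UNIV. \<Sum>j\<in>UNIV. H i j * pd i u x * pd j v x) / (u x)\<^sup>2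
      - (\<Sum>i\<in>UNIV. \<Sum>j\<in>UNIV. H i j * pd i v x * pd j u x) / (u x)\<^sup>2
      - v x * (\<Sum>i\<in>UNIV. \<Sum>j\<in>UNIV. H i j * Gu i j) / (u x)\<^sup>2 + 2 * v x * (\<Sum>i\<in>UNIV. \<Sum>j\<in>UNIV. H i j * pd i u x * pd j u x) / (u x)^3"
    by (simp only: sum.distrib sum_subtractf sum_divide_distrib sum_distrib_left times_divide_eq_right)
  also have "\<dots> = lap g v x / u x - 2 * coinner g x (grad u x) (grad v x) / (u x)\<^sup>2
     - v x * lap g u x / (u x)\<^sup>2 + 2 * v x * coinner g x (grad u x) (grad u x) / (u x)^3"
    unfolding Lv Lu C1 C2 A by simp
  finally show ?thesis .
qed

lemma Rmphi_gh: assumes vs: "smooth_fun U v" and vp: "\<forall>y\<in>U. v y > 0" and x: "x \<in> U"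
  shows "Rmphi gh m (\<lambda>y. v y / u y) x + m * \<mu> / (v x / u x)\<^sup>2
    = (u x)\<^sup>2 * (Rmphi g m v x + m * \<mu> / (v x)\<^sup>2) + 2 * (m + real CARD('n) - 1) * u x * lap_phi g m v u x
      - (m + real CARD('n)) * (m + real CARD('n) - 1) * coinner g x (grad u x) (grad u x)"
proof -
  have ux: "u x \<noteq> 0" by (rule u0[OF x])
  have vx: "v x \<noteq> 0" using vp x by auto
  define R where "R = scal g x"
  define Lu where "Lu = lap g u x"
  define Lv where "Lv = lap g v x"
  define A where "A = coinner g x (grad u x) (grad u x)"
  define B where "B = coinner g x (grad v x) (grad v x)"
  define C where "C = coinner g x (grad u x) (grad v x)"
  define nn where "nn = real CARD('n)"
  have C': "coinner g x (grad v x) (grad u x) = C" unfolding C_def by (rule coinner_sym[OF gm x])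
  have gvh: "grad (\<lambda>y. v y / u y) x = (1 / u x) *\<^sub>R grad v x - (v x / (u x)\<^sup>2) *\<^sub>R grad u x"
    by (rule grad_vu[OF vs x])
  have c1: "coinner g x (grad u x) (grad (\<lambda>y. v y / u y) x) = C / u x - v x * A / (u x)\<^sup>2"
    unfolding gvh coinner_diff_right coinner_scaleR_right C_def[symmetric] A_def[symmetric] by simp
  have c2: "coinner gh x (grad (\<lambda>y. v y / u y) x) (grad (\<lambda>y. v y / u y) x)
     = (u x)\<^sup>2 * (B / (u x)\<^sup>2 - 2 * v x * C / (u x)^3 + (v x)\<^sup>2 * A / (u x)^4)"
    unfolding coinner_gh[OF x] gvh coinner_diff_right coinner_diff_left coinner_scaleR_right coinner_scaleR_left
      C' C_def[symmetric] A_def[symmetric] B_def[symmetric]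
    using ux by (simp add: field_simps eval_nat_numeral)
  have sg: "scal gh x = (u x)\<^sup>2 * R + 2 * (nn - 1) * u x * Lu - nn * (nn - 1) * A"
    unfolding R_def Lu_def A_def nn_def by (rule scal_gh[OF x])
  have lg: "lap gh (\<lambda>y. v y / u y) x = (u x)\<^sup>2 * (Lv / u x - 2 * C / (u x)\<^sup>2 - v x * Lu / (u x)\<^sup>2 + 2 * v x * A / (u x)^3)
      - (nn - 2) * u x * (C / u x - v x * A / (u x)\<^sup>2)"
    unfolding lap_gh[OF x] lap_vu[OF vs x] c1 Lv_def Lu_def C_def A_def nn_def ..
  have "Rmphi gh m (\<lambda>y. v y / u y) x + m * \<mu> / (v x / u x)\<^sup>2
    = ((u x)\<^sup>2 * R + 2 * (nn - 1) * u x * Lu - nn * (nn - 1) * A)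
      - 2 * m / (v x / u x) * ((u x)\<^sup>2 * (Lv / u x - 2 * C / (u x)\<^sup>2 - v x * Lu / (u x)\<^sup>2 + 2 * v x * A / (u x)^3)
      - (nn - 2) * u x * (C / u x - v x * A / (u x)\<^sup>2))
      - m * (m - 1) / (v x / u x)\<^sup>2 * ((u x)\<^sup>2 * (B / (u x)\<^sup>2 - 2 * v x * C / (u x)^3 + (v x)\<^sup>2 * A / (u x)^4))
      + m * \<mu> / (v x / u x)\<^sup>2"
    unfolding Rmphi_def sg lg c2 by simp
  also have "\<dots> = (u x)\<^sup>2 * (R - 2 * m / v x * Lv - m * (m - 1) / (v x)\<^sup>2 * B + m * \<mu> / (v x)\<^sup>2)
      + 2 * (m + nn - 1) * u x * (Lu + m / v x * C) - (m + nn) * (m + nn - 1) * A"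
  proof -
    have P1: "2 * m / (v x / u x) * ((u x)\<^sup>2 * (Lv / u x - 2 * C / (u x)\<^sup>2 - v x * Lu / (u x)\<^sup>2 + 2 * v x * A / (u x)^3)
      - (nn - 2) * u x * (C / u x - v x * A / (u x)\<^sup>2))
      = 2 * m * ((u x)\<^sup>2 * Lv / v x) - 2 * m * nn * (u x * C / v x) - 2 * m * u x * Lu + 2 * m * nn * A"
      using ux vx by (simp add: field_simps eval_nat_numeral)
    have P2: "m * (m - 1) / (v x / u x)\<^sup>2 * ((u x)\<^sup>2 * (B / (u x)\<^sup>2 - 2 * v x * C / (u x)^3 + (v x)\<^sup>2 * A / (u x)^4))
      = m * (m - 1) * ((u x)\<^sup>2 * B / (v x)\<^sup>2) - 2 * m * (m - 1) * (u x * C / v x) + m * (m - 1) * A"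
      using ux vx by (simp add: field_simps eval_nat_numeral)
    have P3: "m * \<mu> / (v x / u x)\<^sup>2 = m * \<mu> * ((u x)\<^sup>2 / (v x)\<^sup>2)"
      using ux vx by (simp add: field_simps)
    have P4: "(u x)\<^sup>2 * (R - 2 * m / v x * Lv - m * (m - 1) / (v x)\<^sup>2 * B + m * \<mu> / (v x)\<^sup>2)
      = (u x)\<^sup>2 * R - 2 * m * ((u x)\<^sup>2 * Lv / v x) - m * (m - 1) * ((u x)\<^sup>2 * B / (v x)\<^sup>2)
        + m * \<mu> * ((u x)\<^sup>2 / (v x)\<^sup>2)"
      by (simp add: algebra_simps)
    have P5: "2 * (m + nn - 1) * u x * (Lu + m / v x * C) = 2 * (m + nn - 1) * u x * Lu + 2 * (m + nn - 1) * m * (u x * C / v x)"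
      by (simp add: algebra_simps)
    show ?thesis unfolding P1 P2 P3 P4 P5 by (simp add: algebra_simps)
  qed
  also have "\<dots> = (u x)\<^sup>2 * (Rmphi g m v x + m * \<mu> / (v x)\<^sup>2) + 2 * (m + real CARD('n) - 1) * u x * lap_phi g m v u x
      - (m + real CARD('n)) * (m + real CARD('n) - 1) * coinner g x (grad u x) (grad u x)"
    unfolding Rmphi_def lap_phi_def C' R_def Lv_def B_def Lu_def A_def nn_def ..
  finally show ?thesis .
qed

end


lemma alg1:
  fixes N u L K A :: real
  assumes "N \<noteq> 0" "N - 1 \<noteq> 0"
  shows "2 * u * (- (L + K / (2 * (N - 1)) * u) / N) + A = - (K * u^2 + 2 * (N - 1) * u * L - N * (N - 1) * A) / (N * (N - 1))"
  using assms by (simp add: field_simps power2_eq_square)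

lemma alg3:
  fixes N t lam :: real
  assumes N0: "N \<noteq> 0" and N1: "N - 1 \<noteq> 0"
  shows "(- (N * (N - 1)) * t = N * lam) \<longleftrightarrow> (t = - lam / (N - 1))"
proof -
  have "(- (N * (N - 1)) * t = N * lam) = (N * (- (N - 1) * t) = N * lam)" by (simp add: algebra_simps)
  also have "\<dots> = (- (N - 1) * t = lam)" using N0 by simp
  also have "\<dots> = (t = - lam / (N - 1))" using N1 by (auto simp: field_simps)
  finally show ?thesis .
qed

theorem lemma4p7:
  fixes U :: "(real^'n::finite) set"
    and g :: "'n metric"
    and v u :: "real^'n \<Rightarrow> real"
    and m \<mu> :: real
  assumes n3: "CARD('n) \<ge> 3"
    and U_open: "open U"
    and g_metric: "riem_metric U g"
    and v_smooth: "smooth_fun U v" and v_pos: "\<forall>x\<in>U. v x > 0"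
    and u_smooth: "smooth_fun U u"
    and m_ok: "m \<notin> {- real CARD('n), 1 - real CARD('n), 2 - real CARD('n)}"
  defines "n \<equiv> real CARD('n)"
  defines "I \<equiv> (\<lambda>x. tractor_scale (1 / (m + n)) (DW g m \<mu> v 1 u x))"
  shows "(\<forall>x\<in>U. tractor_sqnorm g x (I x) =
            - ((Rmphi g m v x + m * \<mu> / (v x)^2) * (u x)^2
               + 2 * (m + n - 1) * u x * lap_phi g m v u x
               - (m + n) * (m + n - 1) * coinner g x (grad u x) (grad u x))
            / ((m + n) * (m + n - 1)))
       \<and> ((\<forall>x\<in>U. u x > 0) \<longrightarrow>
           (\<forall>lam::real.
              (\<forall>x\<in>U. Rmphi (conf_metric u g) m (\<lambda>y. v y / u y) x
                        + m * \<mu> / (v x / u x)^2 = (m + n) * lam)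
              \<longleftrightarrow> (\<forall>x\<in>U. tractor_sqnorm g x (I x) = - lam / (m + n - 1))))"
proof -
  have N0: "m + n \<noteq> 0" using m_ok unfolding n_def by (auto simp: algebra_simps)
  have N1: "m + n - 1 \<noteq> 0" using m_ok unfolding n_def by (auto simp: algebra_simps)
  have part1: "tractor_sqnorm g x (I x) =
            - ((Rmphi g m v x + m * \<mu> / (v x)^2) * (u x)^2
               + 2 * (m + n - 1) * u x * lap_phi g m v u x
               - (m + n) * (m + n - 1) * coinner g x (grad u x) (grad u x))
            / ((m + n) * (m + n - 1))" for x
  proof -
    have e: "I x = (u x, grad u x, - (lap_phi g m v u x + JW g m \<mu> v x * u x) / (m + n))"
      unfolding I_def DW_def tractor_scale_def Let_def n_def using N0 unfolding n_def
      by (simp add: divide_inverse)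
    have "tractor_sqnorm g x (I x) = 2 * u x * (- (lap_phi g m v u x + JW g m \<mu> v x * u x) / (m + n))
       + coinner g x (grad u x) (grad u x)"
      unfolding e tractor_sqnorm_def by simp
    also have "\<dots> = - ((Rmphi g m v x + m * \<mu> / (v x)^2) * (u x)^2
               + 2 * (m + n - 1) * u x * lap_phi g m v u x
               - (m + n) * (m + n - 1) * coinner g x (grad u x) (grad u x))
            / ((m + n) * (m + n - 1))"
      unfolding JW_def n_def[symmetric] by (rule alg1[OF N0 N1])
    finally show ?thesis .
  qed
  show ?thesis
  proof (intro conjI ballI impI allI)
    fix x assume "x \<in> U" show "tractor_sqnorm g x (I x) =
            - ((Rmphi g m v x + m * \<mu> / (v x)^2) * (u x)^2
               + 2 * (m + n - 1) * u x * lap_phi g m v u x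
               - (m + n) * (m + n - 1) * coinner g x (grad u x) (grad u x))
            / ((m + n) * (m + n - 1))" by (rule part1)
  next
    fix lam :: real
    assume up: "\<forall>x\<in>U. u x > 0"
    interpret C: conf U g u by unfold_locales (use U_open g_metric u_smooth up in auto)
    have key: "Rmphi (conf_metric u g) m (\<lambda>y. v y / u y) x + m * \<mu> / (v x / u x)^2
        = - ((m + n) * (m + n - 1)) * tractor_sqnorm g x (I x)" if x: "x \<in> U" for x
    proof -
      have c0: "(m + n) * (m + n - 1) \<noteq> 0" using N0 N1 by simp
      have "Rmphi (conf_metric u g) m (\<lambda>y. v y / u y) x + m * \<mu> / (v x / u x)^2
         = (Rmphi g m v x + m * \<mu> / (v x)^2) * (u x)^2
               + 2 * (m + n - 1) * u x * lap_phi g m v u x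
               - (m + n) * (m + n - 1) * coinner g x (grad u x) (grad u x)"
        unfolding C.Rmphi_gh[OF v_smooth v_pos x] n_def by (simp add: mult.commute)
      also have "\<dots> = - ((m + n) * (m + n - 1)) * tractor_sqnorm g x (I x)"
        unfolding part1 using c0 by simp
      finally show ?thesis .
    qed
    have "(Rmphi (conf_metric u g) m (\<lambda>y. v y / u y) x + m * \<mu> / (v x / u x)^2 = (m + n) * lam)
        \<longleftrightarrow> (tractor_sqnorm g x (I x) = - lam / (m + n - 1))" if x: "x \<in> U" for x
      unfolding key[OF x] by (rule alg3[OF N0 N1])
    then show "(\<forall>x\<in>U. Rmphi (conf_metric u g) m (\<lambda>y. v y / u y) x
                        + m * \<mu> / (v x / u x)^2 = (m + n) * lam)
              \<longleftrightarrow> (\<forall>x\<in>U. tractor_sqnorm g x (I x) = - lam / (m + n - 1))" by blast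
  qed
qed


end
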